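(* For every integer $\kappa\ge 1$: if there exists a $\frac{\kappa+1}{\kappa}$-APLS for the minimum edge cover problem on graphs of odd-girth at least $2\kappa+1$ with proof size $r$, then there exists a PLS for the minimum edge cover problem on rings with $2\kappa+1$ nodes with proof size $r+O(1)$.
   Context: All graphs are finite, connected and undirected, $G=(V,E)$, $n=|V|$, $N(v)$ is the set of neighbors of $v$; each node distinguishes its incident edges by port numbers. An input assignment $\mathsf{I}:V\to\{0,1\}^*$ and an output assignment $\mathsf{O}:V\to\{0,1\}^*$ give each node a local input and a local output; an IO graph $\langle G,\mathsf I,\mathsf O\rangle$ is a configuration graph with $S(v)=\mathsf I(v)\cdot\mathsf O(v)$. Given a universe $\mathcal U$ of configuration graphs and disjoint families $\mathcal F_Y,\mathcal F_N\subseteq\mathcal U$, a gap proof labeling scheme (GPLS) consists of a prover which, given a configuration graph in $\mathcal F_Y$, assigns a label $L(v)\in\{0,1\}^*$ to every node, and a verifier which at each node $v$ receives only $\langle S(v),L(v),L^N(v)\rangle$, where $L^N(v)$ is the vector of labels of $v$'s neighbors (indexed by port), and outputs True or False; the verifier accepts if all nodes output True and rejects otherwise. The GPLS is correct if (i) for every configuration graph in $\mathcal F_Y$ the verifier accepts under the prover's labels, and (ii) for every configuration graph in $\mathcal F_N$ the verifier rejects under every label assignment. Its proof size is the maximum label length assigned by the prover over configuration graphs in $\mathcal F_Y$. For an optimization problem $\Psi=\langle\Pi,f\rangle$ ($\Pi$ a set of IO graphs = feasible solutions, $f$ integer objective, $OPT_\Psi(G,\mathsf I)$ the optimum over feasible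 $\mathsf O$), and $\alpha\ge1$, an $\alpha$-APLS is a GPLS over $\mathcal U=\{\langle G,\mathsf I,\mathsf O\rangle:\langle G,\mathsf I\rangle\text{ admits a feasible solution}\}$ with $\mathcal F_Y$ the IO graphs in $\Pi$ with $f=OPT_\Psi$, and $\mathcal F_N$ equal to $\mathcal U$ minus the IO graphs in $\Pi$ with $f\le\alpha\cdot OPT_\Psi$ (minimization) resp. $f\ge OPT_\Psi/\alpha$ (maximization). A PLS is a $1$-APLS. Restricting to a graph family means the universe contains only IO graphs whose underlying graph lies in the family. Minimum edge cover: the output assignment encodes a set $C\subseteq E$; it is feasible iff $C$ is an edge cover (every node is incident on an edge of $C$), and $f=|C|$ is minimized. The odd-girth of a graph is the length of its shortest odd cycle. A ring is a cycle graph. *)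

theory Defs
  imports Complex_Main
begin

text \<open>A graph has a vertex set (node names are natural numbers; they are not visible
to the verifier) and, for each node v, the list of its neighbours indexed by port
number: port i (i < length (nbrs G v)) leads to nbrs G v ! i.\<close>

record pgraph =
  verts :: "nat set"
  nbrs  :: "nat \<Rightarrow> nat list"

definition adj_rel :: "pgraph \<Rightarrow> (nat \<times> nat) set" where
  "adj_rel G = {(u, v). u \<in> verts G \<and> v \<in> set (nbrs G u)}"

definition valid_graph :: "pgraph \<Rightarrow> bool" where
  "valid_graph G \<longleftrightarrow>
     finite (verts G) \<and> verts G \<noteq> {} \<and>
     (\<forall>v \<in> verts G. distinct (nbrs G v) \<and> set (nbrs G v) \<subseteq> verts G \<and> v \<notin> set (nbrs G v)) \<and>
     (\<forall>u \<in> verts G. \<forall>v \<in> verts G. v \<in> set (nbrs G u) \<longleftrightarrow> u \<in> set (nbrs G v)) \<and>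
     (\<forall>u \<in> verts G. \<forall>v \<in> verts G. (u, v) \<in> (adj_rel G)\<^sup>*)"

definition edges :: "pgraph \<Rightarrow> nat set set" where
  "edges G = {{u, v} | u v. u \<in> verts G \<and> v \<in> set (nbrs G u)}"

definition is_cycle :: "pgraph \<Rightarrow> nat list \<Rightarrow> bool" where
  "is_cycle G cs \<longleftrightarrow>
     length cs \<ge> 3 \<and> distinct cs \<and> set cs \<subseteq> verts G \<and>
     (\<forall>i < length cs. cs ! ((i + 1) mod length cs) \<in> set (nbrs G (cs ! i)))"

text \<open>Odd-girth (length of a shortest odd cycle) is at least m
(vacuously true for graphs without odd cycles, whose odd-girth is infinite).\<close>
definition odd_girth_ge :: "pgraph \<Rightarrow> nat \<Rightarrow> bool" where
  "odd_girth_ge G m \<longleftrightarrow> (\<forall>cs. is_cycle G cs \<and> odd (length cs) \<longrightarrow> length cs \<ge> m)"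

definition is_ring :: "pgraph \<Rightarrow> nat \<Rightarrow> bool" where
  "is_ring G n \<longleftrightarrow>
     (\<exists>cs. is_cycle G cs \<and> set cs = verts G \<and> length cs = n) \<and>
     (\<forall>v \<in> verts G. length (nbrs G v) = 2)"

type_synonym assignment = "nat \<Rightarrow> bool list"
type_synonym iograph = "pgraph \<times> assignment \<times> assignment"

text \<open>A verifier maps the local view \<open>\<langle>S(v), L(v), L^N(v)\<rangle>\<close> to True/False;
\<open>L^N(v)\<close> is the list of neighbour labels indexed by port.\<close>
type_synonym verifier = "bool list \<Rightarrow> bool list \<Rightarrow> bool list list \<Rightarrow> bool"

definition accepts :: "verifier \<Rightarrow> iograph \<Rightarrow> assignment \<Rightarrow> bool" where
  "accepts ver x L \<longleftrightarrow>
     (case x of (G, I, Out) \<Rightarrow>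
        \<forall>v \<in> verts G. ver (I v @ Out v) (L v) (map L (nbrs G v)))"

text \<open>Existence of a GPLS over universe U (implicit in FY/FN) with yes-family FY,
no-family FN, and proof size at most r.  The prover is an arbitrary choice of a
labelling for each yes-instance.\<close>
definition has_GPLS :: "iograph set \<Rightarrow> iograph set \<Rightarrow> nat \<Rightarrow> bool" where
  "has_GPLS FY FN r \<longleftrightarrow>
     (\<exists>ver :: verifier.
        (\<forall>x \<in> FY. \<exists>L. (\<forall>v \<in> verts (fst x). length (L v) \<le> r) \<and> accepts ver x L) \<and>
        (\<forall>x \<in> FN. \<forall>L. \<not> accepts ver x L))"

definition OPT_min :: "(iograph \<Rightarrow> bool) \<Rightarrow> (iograph \<Rightarrow> int) \<Rightarrow> pgraph \<Rightarrow> assignment \<Rightarrow> int" where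
  "OPT_min Pi f G I = (LEAST k. \<exists>Out. Pi (G, I, Out) \<and> f (G, I, Out) = k \<and>
                         (\<forall>Out'. Pi (G, I, Out') \<longrightarrow> k \<le> f (G, I, Out')))"

definition APLS_universe :: "(iograph \<Rightarrow> bool) \<Rightarrow> (pgraph \<Rightarrow> bool) \<Rightarrow> iograph set" where
  "APLS_universe Pi fam =
     {(G, I, Out). valid_graph G \<and> fam G \<and> (\<exists>Out'. Pi (G, I, Out'))}"

definition APLS_yes :: "(iograph \<Rightarrow> bool) \<Rightarrow> (iograph \<Rightarrow> int) \<Rightarrow> (pgraph \<Rightarrow> bool) \<Rightarrow> iograph set" where
  "APLS_yes Pi f fam =
     {(G, I, Out). (G, I, Out) \<in> APLS_universe Pi fam \<and> Pi (G, I, Out) \<and> f (G, I, Out) = OPT_min Pi f G I}"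

definition APLS_no_min :: "(iograph \<Rightarrow> bool) \<Rightarrow> (iograph \<Rightarrow> int) \<Rightarrow> (pgraph \<Rightarrow> bool) \<Rightarrow> real \<Rightarrow> iograph set" where
  "APLS_no_min Pi f fam \<alpha> =
     {(G, I, Out). (G, I, Out) \<in> APLS_universe Pi fam \<and>
        \<not> (Pi (G, I, Out) \<and> real_of_int (f (G, I, Out)) \<le> \<alpha> * real_of_int (OPT_min Pi f G I))}"

text \<open>There is an alpha-APLS with proof size at most r for the minimization problem
(Pi, f) restricted to the graph family fam.  A PLS is the case alpha = 1.\<close>
definition has_APLS_min :: "(iograph \<Rightarrow> bool) \<Rightarrow> (iograph \<Rightarrow> int) \<Rightarrow> (pgraph \<Rightarrow> bool) \<Rightarrow> real \<Rightarrow> nat \<Rightarrow> bool" where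
  "has_APLS_min Pi f fam \<alpha> r \<longleftrightarrow>
     has_GPLS (APLS_yes Pi f fam) (APLS_no_min Pi f fam \<alpha>) r"

text \<open>Encoding convention: there is no input (I v = []); the output Out v of node v is a
bit string of length deg v whose i-th bit says whether the edge at port i is in C;
both endpoints of an edge must agree.\<close>
definition ec_encoding_ok :: "pgraph \<Rightarrow> assignment \<Rightarrow> bool" where
  "ec_encoding_ok G Out \<longleftrightarrow>
     (\<forall>v \<in> verts G. length (Out v) = length (nbrs G v)) \<and>
     (\<forall>u \<in> verts G. \<forall>i < length (nbrs G u). \<forall>j < length (nbrs G (nbrs G u ! i)).
        nbrs G (nbrs G u ! i) ! j = u \<longrightarrow> (Out u ! i \<longleftrightarrow> Out (nbrs G u ! i) ! j))"

definition ec_set :: "pgraph \<Rightarrow> assignment \<Rightarrow> nat set set" where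
  "ec_set G Out = {{u, nbrs G u ! i} | u i. u \<in> verts G \<and> i < length (nbrs G u) \<and> Out u ! i}"

definition is_edge_cover :: "pgraph \<Rightarrow> nat set set \<Rightarrow> bool" where
  "is_edge_cover G C \<longleftrightarrow> C \<subseteq> edges G \<and> (\<forall>v \<in> verts G. \<exists>e \<in> C. v \<in> e)"

fun ec_feasible :: "iograph \<Rightarrow> bool" where
  "ec_feasible (G, I, Out) \<longleftrightarrow>
     (\<forall>v \<in> verts G. I v = []) \<and> ec_encoding_ok G Out \<and> is_edge_cover G (ec_set G Out)"

fun ec_size :: "iograph \<Rightarrow> int" where
  "ec_size (G, I, Out) = int (card (ec_set G Out))"

end

theory Submission
  imports Defs
begin



lemma OPT_eq:
  assumes "Pi (G, I, Out)" "\<And>Out'. Pi (G, I, Out') \<Longrightarrow> f (G, I, Out) \<le> f (G, I, Out')"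
  shows "OPT_min Pi f G I = f (G, I, Out)"
  unfolding OPT_min_def
proof (rule Least_equality)
  show "\<exists>Out'. Pi (G, I, Out') \<and> f (G, I, Out') = f (G, I, Out) \<and> (\<forall>Out''. Pi (G, I, Out'') \<longrightarrow> f (G, I, Out) \<le> f (G, I, Out''))"
    using assms by blast
next
  fix y assume "\<exists>Out'. Pi (G, I, Out') \<and> f (G, I, Out') = y \<and> (\<forall>Out''. Pi (G, I, Out'') \<longrightarrow> y \<le> f (G, I, Out''))"
  then obtain O1 where "Pi (G, I, O1)" "f (G,I,O1) = y" by blast
  then show "f (G, I, Out) \<le> y" using assms by metis
qed

lemma OPT_witness:
  assumes "Pi (G, I, Out0)" "\<And>Out. f (G, I, Out) \<ge> 0"
  shows "\<exists>Out. Pi (G, I, Out) \<and> OPT_min Pi f G I = f (G, I, Out)"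
proof -
  define S where "S = {k::nat. \<exists>Out. Pi (G, I, Out) \<and> f (G, I, Out) = int k}"
  have "f (G,I,Out0) = int (nat (f (G,I,Out0)))" using assms(2) by simp
  then have "nat (f (G,I,Out0)) \<in> S" using assms(1) unfolding S_def by blast
  then have "(LEAST k. k \<in> S) \<in> S" by (rule LeastI)
  then obtain Om where Om: "Pi (G, I, Om)" "f (G,I,Om) = int (LEAST k. k \<in> S)" unfolding S_def by blast
  have "f (G,I,Om) \<le> f (G,I,O')" if "Pi (G,I,O')" for O'
  proof -
    have "f (G,I,O') = int (nat (f (G,I,O')))" using assms(2) by simp
    then have "nat (f (G,I,O')) \<in> S" using that unfolding S_def by blast
    then have "(LEAST k. k \<in> S) \<le> nat (f (G,I,O'))" by (rule Least_le)
    then show ?thesis using Om(2) assms(2)[of O'] by linarith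
  qed
  then show ?thesis using OPT_eq[of Pi G I Om f] Om(1) by metis
qed

lemma OPT_le:
  assumes "Pi (G, I, Out0)" "\<And>Out. f (G, I, Out) \<ge> 0" "Pi (G, I, Out')"
  shows "OPT_min Pi f G I \<le> f (G, I, Out')"
proof -
  have P: "\<exists>Out. Pi (G, I, Out) \<and> f (G, I, Out) = OPT_min Pi f G I \<and> (\<forall>O'. Pi (G, I, O') \<longrightarrow> OPT_min Pi f G I \<le> f (G, I, O'))"
  proof -
    define S where "S = {k::nat. \<exists>Out. Pi (G, I, Out) \<and> f (G, I, Out) = int k}"
    have "f (G,I,Out0) = int (nat (f (G,I,Out0)))" using assms(2) by simp
  then have "nat (f (G,I,Out0)) \<in> S" using assms(1) unfolding S_def by blast
    then have "(LEAST k. k \<in> S) \<in> S" by (rule LeastI)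
    then obtain Om where Om: "Pi (G, I, Om)" "f (G,I,Om) = int (LEAST k. k \<in> S)" unfolding S_def by blast
    have mn: "f (G,I,Om) \<le> f (G,I,O')" if "Pi (G,I,O')" for O'
    proof -
      have "f (G,I,O') = int (nat (f (G,I,O')))" using assms(2) by simp
    then have "nat (f (G,I,O')) \<in> S" using that unfolding S_def by blast
      then have "(LEAST k. k \<in> S) \<le> nat (f (G,I,O'))" by (rule Least_le)
      then show ?thesis using Om(2) assms(2)[of O'] by linarith
    qed
    have "OPT_min Pi f G I = f (G,I,Om)" using OPT_eq[of Pi G I Om f] Om(1) mn by metis
    then show ?thesis using Om(1) mn by metis
  qed
  then show ?thesis using assms(3) by blast
qed

lemma ec_size_nonneg: "ec_size x \<ge> 0"
  by (cases x) auto

lemma edges_finite: "finite (verts G) \<Longrightarrow> finite (edges G)"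
proof -
  assume f: "finite (verts G)"
  have "edges G \<subseteq> (\<lambda>(u,v). {u,v}) ` (SIGMA u:verts G. set (nbrs G u))"
    unfolding edges_def by auto
  moreover have "finite (SIGMA u:verts G. set (nbrs G u))" using f by auto
  ultimately show ?thesis by (meson finite_surj)
qed

lemma cover_lb:
  assumes "finite (verts G)" "is_edge_cover G C"
  shows "card (verts G) \<le> 2 * card C"
proof -
  have fC: "finite C" using assms edges_finite unfolding is_edge_cover_def by (meson finite_subset)
  have fe: "\<forall>e\<in>C. finite e \<and> card e \<le> 2"
  proof
    fix e assume "e \<in> C"
    then have "e \<in> edges G" using assms unfolding is_edge_cover_def by auto
    then obtain u v where "e = {u,v}" unfolding edges_def by auto
    then show "finite e \<and> card e \<le> 2" by (simp add: card_insert_le_m1)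
  qed
  have "verts G \<subseteq> \<Union>C" using assms unfolding is_edge_cover_def by auto
  then have "card (verts G) \<le> card (\<Union>C)" using fC fe by (intro card_mono) auto
  also have "\<dots> \<le> (\<Sum>e\<in>C. card e)" by (rule card_Union_le_sum_card)
  also have "\<dots> \<le> (\<Sum>e\<in>C. 2)" using fe by (intro sum_mono) auto
  finally show ?thesis by simp
qed




definition nx :: "nat \<Rightarrow> nat \<Rightarrow> nat" where "nx n j = (j + 1) mod n"
definition pv :: "nat \<Rightarrow> nat \<Rightarrow> nat" where "pv n j = (j + n - 1) mod n"

lemma nx_lt: "n > 0 \<Longrightarrow> nx n j < n" unfolding nx_def by simp
lemma pv_lt: "n > 0 \<Longrightarrow> pv n j < n" unfolding pv_def by simp

lemma nx_pv: "j < n \<Longrightarrow> nx n (pv n j) = j"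
  unfolding nx_def pv_def
proof -
  assume j: "j < n"
  have "((j + n - 1) mod n + 1) mod n = ((j + n - 1) + 1) mod n" by (simp add: mod_Suc_eq)
  also have "\<dots> = (j + n) mod n" using j by simp
  also have "\<dots> = j" using j by simp
  finally show "((j + n - 1) mod n + 1) mod n = j" .
qed

lemma pv_nx: "j < n \<Longrightarrow> pv n (nx n j) = j"
  unfolding nx_def pv_def
proof -
  assume j: "j < n"
  have "((j + 1) mod n + n - 1) mod n = ((j + 1) mod n + (n - 1)) mod n" using j by simp
  also have "\<dots> = ((j + 1) + (n - 1)) mod n" by (simp add: mod_add_left_eq)
  also have "\<dots> = (j + n) mod n" using j by simp
  also have "\<dots> = j" using j by simp
  finally show "((j + 1) mod n + n - 1) mod n = j" .
qed

lemma nx_neq: "n \<ge> 2 \<Longrightarrow> j < n \<Longrightarrow> nx n j \<noteq> j"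
  unfolding nx_def
proof -
  assume n: "n \<ge> 2" and j: "j < n"
  show "(j + 1) mod n \<noteq> j"
  proof (cases "j + 1 < n")
    case True then show ?thesis by simp
  next
    case False then have "j + 1 = n" using j by simp
    then show ?thesis using n by simp
  qed
qed

lemma pv_neq: "n \<ge> 2 \<Longrightarrow> j < n \<Longrightarrow> pv n j \<noteq> j"
  by (metis nx_neq nx_pv pv_lt not_numeral_le_zero gr0I)

lemma nx_nx_neq: "n \<ge> 3 \<Longrightarrow> j < n \<Longrightarrow> nx n (nx n j) \<noteq> j"
proof
  assume n: "n \<ge> 3" and j: "j < n" and e: "nx n (nx n j) = j"
  have "nx n (nx n j) = (j + 2) mod n" unfolding nx_def by (simp add: mod_Suc_eq)
  then have e2: "(j + 2) mod n = j" using e j by simp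
  consider "j + 2 < n" | "j + 2 = n" | "j + 2 = n + 1" using j by linarith
  then show False
  proof cases
    case 1 then show False using e2 by simp
  next
    case 2 then show False using e2 n by simp
  next
    case 3 then have "(j + 2) mod n = 1" using n by (metis mod_add_self1 mod_less add.commute less_le_trans numeral_le_iff one_less_numeral_iff semiring_norm(77) one_le_numeral dual_order.strict_trans1 one_less_numeral_iff)
    then show False using e2 3 n by simp
  qed
qed

lemma nx_neq_pv: "n \<ge> 3 \<Longrightarrow> j < n \<Longrightarrow> nx n j \<noteq> pv n j"
  by (metis nx_nx_neq nx_pv)

definition ringS :: "pgraph \<Rightarrow> nat list \<Rightarrow> nat \<Rightarrow> bool" where
  "ringS G cs n \<longleftrightarrow> n \<ge> 3 \<and> length cs = n \<and> distinct cs \<and> set cs = verts G \<and>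
     (\<forall>j<n. length (nbrs G (cs!j)) = 2 \<and> distinct (nbrs G (cs!j)) \<and>
            set (nbrs G (cs!j)) = {cs!(nx n j), cs!(pv n j)})"

lemma ring_of:
  assumes v: "valid_graph G" and r: "is_ring G n" and n: "n \<ge> 3"
  shows "\<exists>cs. ringS G cs n"
proof -
  obtain cs where c: "is_cycle G cs" "set cs = verts G" "length cs = n"
    and deg: "\<forall>v \<in> verts G. length (nbrs G v) = 2" using r unfolding is_ring_def by blast
  have dcs: "distinct cs" using c unfolding is_cycle_def by auto
  have adj: "\<And>j. j < n \<Longrightarrow> cs!(nx n j) \<in> set (nbrs G (cs!j))"
    using c unfolding is_cycle_def nx_def by auto
  have inV: "\<And>j. j < n \<Longrightarrow> cs!j \<in> verts G" using c by (metis nth_mem)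
  have sym: "\<forall>u \<in> verts G. \<forall>w \<in> verts G. w \<in> set (nbrs G u) \<longleftrightarrow> u \<in> set (nbrs G w)"
    using v unfolding valid_graph_def by blast
  have dn: "\<forall>u \<in> verts G. distinct (nbrs G u)" using v unfolding valid_graph_def by blast
  have main: "\<forall>j<n. length (nbrs G (cs!j)) = 2 \<and> distinct (nbrs G (cs!j)) \<and>
            set (nbrs G (cs!j)) = {cs!(nx n j), cs!(pv n j)}"
  proof (intro allI impI)
    fix j assume j: "j < n"
    have pj: "pv n j < n" using pv_lt j by simp
    have a1: "cs!(nx n j) \<in> set (nbrs G (cs!j))" using adj j by simp
    have "cs!j \<in> set (nbrs G (cs!(pv n j)))" using adj[OF pj] nx_pv[OF j] by simp
    then have a2: "cs!(pv n j) \<in> set (nbrs G (cs!j))" using sym inV j pj by blast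
    have ne: "cs!(nx n j) \<noteq> cs!(pv n j)"
      using nx_neq_pv[OF n j] dcs c(3) nx_lt pj j by (simp add: nth_eq_iff_index_eq)
    have l2: "length (nbrs G (cs!j)) = 2" using deg inV j by blast
    have d: "distinct (nbrs G (cs!j))" using dn inV j by blast
    have "card (set (nbrs G (cs!j))) = 2" using l2 d by (simp add: distinct_card)
    moreover have "{cs!(nx n j), cs!(pv n j)} \<subseteq> set (nbrs G (cs!j))" using a1 a2 by auto
    moreover have "card {cs!(nx n j), cs!(pv n j)} = 2" using ne by simp
    ultimately have "set (nbrs G (cs!j)) = {cs!(nx n j), cs!(pv n j)}"
      by (metis card_subset_eq finite_set)
    then show "length (nbrs G (cs!j)) = 2 \<and> distinct (nbrs G (cs!j)) \<and> set (nbrs G (cs!j)) = {cs!(nx n j), cs!(pv n j)}"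
      using l2 d by simp
  qed
  show ?thesis unfolding ringS_def using main n c dcs by blast
qed

definition outrel :: "pgraph \<Rightarrow> nat list \<Rightarrow> nat \<Rightarrow> assignment \<Rightarrow> (nat \<Rightarrow> bool) \<Rightarrow> bool" where
  "outrel G cs n Out \<beta> \<longleftrightarrow> (\<forall>j<n. length (Out (cs!j)) = 2 \<and>
     (\<forall>k<2. Out (cs!j) ! k = (if nbrs G (cs!j) ! k = cs!(nx n j) then \<beta> j else \<beta> (pv n j))))"

context
  fixes G cs n
  assumes R: "ringS G cs n"
begin

lemma R_n: "n \<ge> 3" using R unfolding ringS_def by simp
lemma R_len: "length cs = n" using R unfolding ringS_def by simp
lemma R_dist: "distinct cs" using R unfolding ringS_def by simp
lemma R_set: "set cs = verts G" using R unfolding ringS_def by simp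
lemma R_nb: "j < n \<Longrightarrow> length (nbrs G (cs!j)) = 2 \<and> distinct (nbrs G (cs!j)) \<and>
            set (nbrs G (cs!j)) = {cs!(nx n j), cs!(pv n j)}" using R unfolding ringS_def by simp

lemma R_inj: "j < n \<Longrightarrow> k < n \<Longrightarrow> cs!j = cs!k \<longleftrightarrow> j = k"
  using R_dist R_len by (simp add: nth_eq_iff_index_eq)

lemma R_vert: "v \<in> verts G \<Longrightarrow> \<exists>j<n. v = cs!j"
  using R_set R_len by (metis in_set_conv_nth)

lemma R_n0: "n > 0" using R_n by simp

lemma R_mem: "j < n \<Longrightarrow> cs!j \<in> verts G"
proof -
  assume "j < n" then have "cs!j \<in> set cs" using R_len by simp
  then show ?thesis using R_set by simp
qed

lemma R_port: "j < n \<Longrightarrow> k < 2 \<Longrightarrow> nbrs G (cs!j) ! k = cs!(nx n j) \<or> nbrs G (cs!j) ! k = cs!(pv n j)"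
  using R_nb by (metis insert_iff nth_mem singletonD)

lemma R_nx_pv_ne: "j < n \<Longrightarrow> cs!(nx n j) \<noteq> cs!(pv n j)"
  using R_inj nx_neq_pv R_n nx_lt pv_lt R_n0 by metis

lemma R_has_port: "j < n \<Longrightarrow> w \<in> {cs!(nx n j), cs!(pv n j)} \<Longrightarrow> \<exists>k<2. nbrs G (cs!j) ! k = w"
  using R_nb by (metis in_set_conv_nth)

lemma edge_inj:
  assumes "j < n" "k < n" "{cs!j, cs!(nx n j)} = {cs!k, cs!(nx n k)}"
  shows "j = k"
proof -
  have nj: "nx n j < n" "nx n k < n" using nx_lt R_n0 by auto
  from assms(3) have "(cs!j = cs!k \<and> cs!(nx n j) = cs!(nx n k)) \<or> (cs!j = cs!(nx n k) \<and> cs!(nx n j) = cs!k)"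
    by (simp add: doubleton_eq_iff)
  then show ?thesis
  proof
    assume "cs!j = cs!k \<and> cs!(nx n j) = cs!(nx n k)" then show ?thesis using R_inj assms by blast
  next
    assume "cs!j = cs!(nx n k) \<and> cs!(nx n j) = cs!k"
    then have "j = nx n k" "nx n j = k" using R_inj assms nj by blast+
    then show ?thesis using nx_nx_neq R_n assms by blast
  qed
qed

lemma ec_set_outrel:
  assumes Or: "outrel G cs n Out \<beta>"
  shows "ec_set G Out = (\<lambda>j. {cs!j, cs!(nx n j)}) ` {j. j < n \<and> \<beta> j}"
proof (intro set_eqI iffI)
  fix e assume "e \<in> ec_set G Out"
  then obtain u i where e: "e = {u, nbrs G u ! i}" "u \<in> verts G" "i < length (nbrs G u)" "Out u ! i"
    unfolding ec_set_def by blast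
  obtain j where j: "j < n" "u = cs!j" using R_vert e(2) by blast
  have i2: "i < 2" using e(3) R_nb j by simp
  have Oi: "Out (cs!j) ! i = (if nbrs G (cs!j) ! i = cs!(nx n j) then \<beta> j else \<beta> (pv n j))"
    using Or j i2 unfolding outrel_def by blast
  show "e \<in> (\<lambda>j. {cs!j, cs!(nx n j)}) ` {j. j < n \<and> \<beta> j}"
  proof (cases "nbrs G (cs!j) ! i = cs!(nx n j)")
    case True then show ?thesis using e j Oi by auto
  next
    case False
    then have p: "nbrs G (cs!j) ! i = cs!(pv n j)" using R_port j i2 by blast
    have "e = {cs!(pv n j), cs!(nx n (pv n j))}" using e j p nx_pv by auto
    moreover have "\<beta> (pv n j)" using Oi False e j by simp
    ultimately show ?thesis using pv_lt R_n0 by blast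
  qed
next
  fix e assume "e \<in> (\<lambda>j. {cs!j, cs!(nx n j)}) ` {j. j < n \<and> \<beta> j}"
  then obtain j where j: "j < n" "\<beta> j" "e = {cs!j, cs!(nx n j)}" by blast
  obtain k where k: "k < 2" "nbrs G (cs!j) ! k = cs!(nx n j)" using R_has_port j by blast
  have "Out (cs!j) ! k" using Or j k unfolding outrel_def by simp
  moreover have "cs!j \<in> verts G" using R_mem j by blast
  moreover have "k < length (nbrs G (cs!j))" using R_nb j k by simp
  ultimately show "e \<in> ec_set G Out" unfolding ec_set_def using j k by (metis (mono_tags, lifting) mem_Collect_eq)
qed

lemma card_outrel:
  assumes Or: "outrel G cs n Out \<beta>"
  shows "card (ec_set G Out) = card {j. j < n \<and> \<beta> j}"
  unfolding ec_set_outrel[OF Or]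
  by (rule card_image) (auto intro: inj_onI edge_inj)

lemma enc_outrel:
  assumes Or: "outrel G cs n Out \<beta>"
  shows "ec_encoding_ok G Out"
  unfolding ec_encoding_ok_def
proof (intro conjI ballI allI impI)
  fix v assume "v \<in> verts G"
  then obtain j where "j < n" "v = cs!j" using R_vert by blast
  then show "length (Out v) = length (nbrs G v)" using Or R_nb unfolding outrel_def by simp
next
  fix u i k
  assume u: "u \<in> verts G" and i: "i < length (nbrs G u)" and k: "k < length (nbrs G (nbrs G u ! i))"
    and bk: "nbrs G (nbrs G u ! i) ! k = u"
  obtain j where j: "j < n" "u = cs!j" using R_vert u by blast
  have i2: "i < 2" using i R_nb j by simp
  have nj: "nx n j < n" "pv n j < n" using nx_lt pv_lt R_n0 by auto
  show "Out u ! i \<longleftrightarrow> Out (nbrs G u ! i) ! k"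
  proof (cases "nbrs G (cs!j) ! i = cs!(nx n j)")
    case True
    have k2: "k < 2" using k R_nb nj True j by simp
    have b: "nbrs G (cs!(nx n j)) ! k = cs!(pv n (nx n j))" using bk True j pv_nx by simp
    have ne: "cs!(pv n (nx n j)) \<noteq> cs!(nx n (nx n j))" by (metis R_nx_pv_ne nj(1))
    have "Out (cs!(nx n j)) ! k = \<beta> (pv n (nx n j))" using Or nj k2 b ne unfolding outrel_def by simp
    moreover have "Out (cs!j) ! i = \<beta> j" using Or j i2 True unfolding outrel_def by simp
    ultimately show ?thesis using True j pv_nx by simp
  next
    case False
    then have p: "nbrs G (cs!j) ! i = cs!(pv n j)" using R_port j i2 by blast
    have k2: "k < 2" using k R_nb nj p j by simp
    have b: "nbrs G (cs!(pv n j)) ! k = cs!(nx n (pv n j))" using bk p j nx_pv by simp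
    have "Out (cs!(pv n j)) ! k = \<beta> (pv n j)" using Or nj k2 b unfolding outrel_def by simp
    moreover have "Out (cs!j) ! i = \<beta> (pv n j)" using Or j i2 False unfolding outrel_def by simp
    ultimately show ?thesis using p j by simp
  qed
qed

lemma cover_outrel:
  assumes Or: "outrel G cs n Out \<beta>" and c: "\<forall>j<n. \<beta> (pv n j) \<or> \<beta> j"
  shows "is_edge_cover G (ec_set G Out)"
  unfolding is_edge_cover_def
proof (intro conjI ballI subsetI)
  fix e assume "e \<in> ec_set G Out"
  then obtain j where j: "j < n" "e = {cs!j, cs!(nx n j)}" using ec_set_outrel[OF Or] by blast
  have "cs!j \<in> verts G" using R_mem j by blast
  moreover have "cs!(nx n j) \<in> set (nbrs G (cs!j))" using R_nb j by simp
  ultimately show "e \<in> edges G" unfolding edges_def using j by blast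
next
  fix v assume "v \<in> verts G"
  then obtain j where j: "j < n" "v = cs!j" using R_vert by blast
  have nj: "pv n j < n" using pv_lt R_n0 by auto
  show "\<exists>e\<in>ec_set G Out. v \<in> e"
  proof (cases "\<beta> j")
    case True then show ?thesis using ec_set_outrel[OF Or] j by blast
  next
    case False
    then have "\<beta> (pv n j)" using c j by blast
    then have "{cs!(pv n j), cs!(nx n (pv n j))} \<in> ec_set G Out" using ec_set_outrel[OF Or] nj by blast
    then show ?thesis using j nx_pv by auto
  qed
qed

lemma cover_outrel_conv:
  assumes Or: "outrel G cs n Out \<beta>" and c: "is_edge_cover G (ec_set G Out)" and j: "j < n"
  shows "\<beta> (pv n j) \<or> \<beta> j"
proof -
  have "cs!j \<in> verts G" using R_mem j by blast
  then obtain e where "e \<in> ec_set G Out" "cs!j \<in> e" using c unfolding is_edge_cover_def by blast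
  then obtain k where k: "k < n" "\<beta> k" "cs!j \<in> {cs!k, cs!(nx n k)}" using ec_set_outrel[OF Or] by blast
  have nk: "nx n k < n" using nx_lt R_n0 by auto
  then have "j = k \<or> j = nx n k" using k R_inj j by auto
  then show ?thesis using k pv_nx by auto
qed

definition port_nx :: "nat \<Rightarrow> nat" where
  "port_nx j = (SOME k. k < 2 \<and> nbrs G (cs!j) ! k = cs!(nx n j))"

lemma port_nx: "j < n \<Longrightarrow> port_nx j < 2 \<and> nbrs G (cs!j) ! port_nx j = cs!(nx n j)"
  unfolding port_nx_def using R_has_port[of j "cs!(nx n j)"] by (metis (mono_tags, lifting) insertI1 someI_ex)

lemma outrel_of_enc:
  assumes E: "ec_encoding_ok G Out"
  shows "outrel G cs n Out (\<lambda>j. Out (cs!j) ! port_nx j)"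
  unfolding outrel_def
proof (intro allI impI conjI)
  fix j assume j: "j < n"
  have vj: "cs!j \<in> verts G" using R_mem j by blast
  then show "length (Out (cs!j)) = 2" using E R_nb j unfolding ec_encoding_ok_def by simp
  fix k assume k: "k < (2::nat)"
  show "Out (cs!j) ! k = (if nbrs G (cs!j) ! k = cs!(nx n j) then Out (cs!j) ! port_nx j else Out (cs!(pv n j)) ! port_nx (pv n j))"
  proof (cases "nbrs G (cs!j) ! k = cs!(nx n j)")
    case True
    have "k = port_nx j" using port_nx[OF j] True R_nb[OF j] k by (metis nth_eq_iff_index_eq)
    then show ?thesis using True by simp
  next
    case False
    then have p: "nbrs G (cs!j) ! k = cs!(pv n j)" using R_port j k by blast
    have pj: "pv n j < n" using pv_lt R_n0 by auto
    have u: "cs!(pv n j) \<in> verts G" using R_mem pj by blast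
    have i: "port_nx (pv n j) < length (nbrs G (cs!(pv n j)))" using port_nx[OF pj] R_nb[OF pj] by simp
    have v: "nbrs G (cs!(pv n j)) ! port_nx (pv n j) = cs!j" using port_nx[OF pj] nx_pv[OF j] by simp
    have "Out (cs!(pv n j)) ! port_nx (pv n j) \<longleftrightarrow> Out (cs!j) ! k"
      using E u i v p k R_nb[OF j] unfolding ec_encoding_ok_def by (metis)
    then show ?thesis using False by simp
  qed
qed

end

definition Rg :: "nat \<Rightarrow> pgraph" where
  "Rg M = \<lparr>verts = {..<M}, nbrs = (\<lambda>i. [pv M i, nx M i])\<rparr>"

lemma Rg_simps[simp]: "verts (Rg M) = {..<M}" "nbrs (Rg M) i = [pv M i, nx M i]"
  unfolding Rg_def by simp_all

lemma Rg_ringS: assumes M: "M \<ge> 3" shows "ringS (Rg M) [0..<M] M"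
proof -
  have main: "\<forall>j<M. length (nbrs (Rg M) ([0..<M] ! j)) = 2 \<and> distinct (nbrs (Rg M) ([0..<M] ! j)) \<and>
    set (nbrs (Rg M) ([0..<M] ! j)) = {[0..<M] ! nx M j, [0..<M] ! pv M j}"
  proof (intro allI impI)
    fix j assume j: "j < M"
    have a: "nx M j < M" "pv M j < M" using nx_lt pv_lt M by auto
    have "nx M j \<noteq> pv M j" using nx_neq_pv M j by blast
    then show "length (nbrs (Rg M) ([0..<M] ! j)) = 2 \<and> distinct (nbrs (Rg M) ([0..<M] ! j)) \<and>
      set (nbrs (Rg M) ([0..<M] ! j)) = {[0..<M] ! nx M j, [0..<M] ! pv M j}"
      using j a by auto
  qed
  show ?thesis unfolding ringS_def using main M by auto
qed

lemma Rg_reach: "M \<ge> 3 \<Longrightarrow> u < M \<Longrightarrow> (u, (u + k) mod M) \<in> (adj_rel (Rg M))\<^sup>*"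
proof (induction k)
  case 0 then show ?case by simp
next
  case (Suc k)
  have a: "(u + k) mod M < M" using Suc by simp
  have "((u + k) mod M, nx M ((u + k) mod M)) \<in> adj_rel (Rg M)"
    unfolding adj_rel_def using a by simp
  moreover have "nx M ((u + k) mod M) = (u + Suc k) mod M" unfolding nx_def by (simp add: mod_Suc_eq)
  ultimately show ?case using Suc by (metis rtrancl.rtrancl_into_rtrancl)
qed

lemma Rg_valid: assumes M: "M \<ge> 3" shows "valid_graph (Rg M)"
proof -
  have A: "\<forall>v \<in> verts (Rg M). distinct (nbrs (Rg M) v) \<and> set (nbrs (Rg M) v) \<subseteq> verts (Rg M) \<and> v \<notin> set (nbrs (Rg M) v)"
  proof
    fix v assume v: "v \<in> verts (Rg M)"
    have vM: "v < M" using v by simp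
    have "nx M v \<noteq> v" "pv M v \<noteq> v" "nx M v \<noteq> pv M v" using nx_neq pv_neq nx_neq_pv M vM by auto
    then show "distinct (nbrs (Rg M) v) \<and> set (nbrs (Rg M) v) \<subseteq> verts (Rg M) \<and> v \<notin> set (nbrs (Rg M) v)"
      using nx_lt pv_lt M by auto
  qed
  have B: "\<forall>u \<in> verts (Rg M). \<forall>v \<in> verts (Rg M). v \<in> set (nbrs (Rg M) u) \<longleftrightarrow> u \<in> set (nbrs (Rg M) v)"
    using nx_pv pv_nx by auto
  have C: "\<forall>u \<in> verts (Rg M). \<forall>v \<in> verts (Rg M). (u, v) \<in> (adj_rel (Rg M))\<^sup>*"
  proof (intro ballI)
    fix u v assume u: "u \<in> verts (Rg M)" and v: "v \<in> verts (Rg M)"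
    have uM: "u < M" and vM: "v < M" using u v by auto
    have "(u, (u + (v + M - u)) mod M) \<in> (adj_rel (Rg M))\<^sup>*" using Rg_reach M uM by blast
    moreover have "(u + (v + M - u)) mod M = v" using uM vM by simp
    ultimately show "(u, v) \<in> (adj_rel (Rg M))\<^sup>*" by simp
  qed
  have D: "verts (Rg M) \<noteq> {}" using M by (simp add: lessThan_empty_iff)
  show ?thesis unfolding valid_graph_def using A B C D by simp
qed

definition rgout :: "nat \<Rightarrow> (nat \<Rightarrow> bool) \<Rightarrow> assignment" where
  "rgout M \<beta> = (\<lambda>i. [\<beta> (pv M i), \<beta> i])"

lemma Rg_outrel: "M \<ge> 3 \<Longrightarrow> outrel (Rg M) [0..<M] M (rgout M \<beta>) \<beta>"
  unfolding outrel_def rgout_def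
proof (intro allI impI conjI)
  fix j k assume M: "M \<ge> 3" and j: "j < M" and k: "k < (2::nat)"
  have a: "nx M j < M" "pv M j < M" using nx_lt pv_lt M by auto
  have ne: "pv M j \<noteq> nx M j" using nx_neq_pv M j by metis
  show "[\<beta> (pv M ([0..<M] ! j)), \<beta> ([0..<M] ! j)] ! k =
       (if nbrs (Rg M) ([0..<M] ! j) ! k = [0..<M] ! nx M j then \<beta> j else \<beta> (pv M j))"
    using k j a ne by (cases k) auto
qed auto




lemma mod_dvd_diff: "(int M) dvd (int (a mod M) - int a)"
proof -
  have "(int a mod int M) mod int M = int a mod int M" by simp
  then have "int M dvd (int a mod int M - int a)" by (simp only: mod_eq_dvd_iff)
  then show ?thesis by (simp add: of_nat_mod)
qed

lemma bij_succ_mod: "(L::nat) > 0 \<Longrightarrow> bij_betw (\<lambda>i. (i + 1) mod L) {..<L} {..<L}"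
proof -
  assume L: "L > 0"
  have inj: "inj_on (\<lambda>i. (i + 1) mod L) {..<L}"
  proof (rule inj_onI)
    fix x y :: nat assume x: "x \<in> {..<L}" and y: "y \<in> {..<L}" and e: "(x + 1) mod L = (y + 1) mod L"
    have "pv L (nx L x) = pv L (nx L y)" using e unfolding nx_def by simp
    then show "x = y" using pv_nx x y by simp
  qed
  moreover have "(\<lambda>i. (i + 1) mod L) ` {..<L} \<subseteq> {..<L}" using L by auto
  ultimately show ?thesis using L by (simp add: bij_betw_def endo_inj_surj)
qed

lemma Rg_odd_cycle:
  assumes M: "M \<ge> 3" and c: "is_cycle (Rg M) cs" and od: "odd (length cs)"
  shows "length cs \<ge> M"
proof (rule ccontr)
  assume "\<not> length cs \<ge> M"
  then have LM: "length cs < M" by simp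
  define L where "L = length cs"
  have L0: "L > 0" using c unfolding is_cycle_def L_def by auto
  have cs_lt: "\<And>i. i < L \<Longrightarrow> cs!i < M"
  proof -
    fix i assume "i < L" then have "cs!i \<in> set cs" unfolding L_def by simp
    then show "cs!i < M" using c unfolding is_cycle_def by auto
  qed
  have step: "\<And>i. i < L \<Longrightarrow> cs!((i+1) mod L) = pv M (cs!i) \<or> cs!((i+1) mod L) = nx M (cs!i)"
    using c unfolding is_cycle_def L_def by auto
  define t :: "nat \<Rightarrow> int" where "t i = (if cs!((i+1) mod L) = nx M (cs!i) then 0 else 1)" for i
  define s :: "nat \<Rightarrow> int" where "s i = 1 - 2 * t i" for i
  have dv: "int M dvd (int (cs!((i+1) mod L)) - int (cs!i) - s i)" if i: "i < L" for i
  proof (cases "cs!((i+1) mod L) = nx M (cs!i)")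
    case True
    then have "int (cs!((i+1) mod L)) - int (cs!i) - s i = int ((cs!i + 1) mod M) - int (cs!i + 1)"
      unfolding s_def t_def nx_def by simp
    then show ?thesis using mod_dvd_diff by metis
  next
    case False
    then have e: "cs!((i+1) mod L) = pv M (cs!i)" using step i by blast
    have "int (cs!((i+1) mod L)) - int (cs!i) - s i = int ((cs!i + M - 1) mod M) - int (cs!i + M - 1) + int M"
      unfolding s_def t_def using False e M unfolding pv_def by simp
    moreover have "int M dvd int ((cs!i + M - 1) mod M) - int (cs!i + M - 1) + int M"
      using mod_dvd_diff by (simp add: dvd_add)
    ultimately show ?thesis by metis
  qed
  have "int M dvd (\<Sum>i<L. int (cs!((i+1) mod L)) - int (cs!i) - s i)"
    using dv by (intro dvd_sum) auto
  moreover have "(\<Sum>i<L. int (cs!((i+1) mod L))) = (\<Sum>i<L. int (cs!i))"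
    using sum.reindex_bij_betw[OF bij_succ_mod[OF L0], of "\<lambda>i. int (cs!i)"] by simp
  ultimately have "int M dvd (- (\<Sum>i<L. s i))"
    by (simp add: sum_subtractf)
  then have d: "int M dvd (\<Sum>i<L. s i)" by simp
  have ab: "\<bar>\<Sum>i<L. s i\<bar> \<le> int L"
  proof -
    have "\<bar>\<Sum>i<L. s i\<bar> \<le> (\<Sum>i<L. \<bar>s i\<bar>)" by (rule sum_abs)
    also have "\<dots> = (\<Sum>i<L. 1)" unfolding s_def t_def by (intro sum.cong) auto
    finally show ?thesis by simp
  qed
  have "(\<Sum>i<L. s i) = 0"
  proof (rule ccontr)
    assume "(\<Sum>i<L. s i) \<noteq> 0"
    then have "\<bar>int M\<bar> \<le> \<bar>\<Sum>i<L. s i\<bar>" using d by (metis dvd_imp_le_int)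
    then show False using ab LM L_def by simp
  qed
  moreover have "(\<Sum>i<L. s i) = int L - 2 * (\<Sum>i<L. t i)"
    unfolding s_def by (simp add: sum_subtractf sum_distrib_left)
  ultimately have "int L = 2 * (\<Sum>i<L. t i)" by simp
  then have "even (int L)" by simp
  then show False using od L_def by simp
qed

lemma Rg_odd_girth: "M \<ge> 3 \<Longrightarrow> m \<le> M \<Longrightarrow> odd_girth_ge (Rg M) m"
  unfolding odd_girth_ge_def using Rg_odd_cycle by (meson le_trans)




lemma cyc_count:
  assumes n: "n > 0" and c: "\<forall>j<n. \<beta> (pv n j) \<or> \<beta> j"
  shows "card {j. j < n \<and> \<beta> j} = card {j. j < n \<and> \<not> \<beta> j} + card {j. j < n \<and> \<beta> j \<and> \<beta> (pv n j)}"
proof -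
  let ?O = "{j. j < n \<and> \<beta> j}" and ?Z = "{j. j < n \<and> \<not> \<beta> j}" and ?P = "{j. j < n \<and> \<beta> j \<and> \<beta> (pv n j)}"
  have eq: "?O = nx n ` ?Z \<union> ?P"
  proof (intro set_eqI iffI)
    fix j assume j: "j \<in> ?O"
    show "j \<in> nx n ` ?Z \<union> ?P"
    proof (cases "\<beta> (pv n j)")
      case True then show ?thesis using j by auto
    next
      case False
      then have "pv n j \<in> ?Z" using pv_lt[OF n] by simp
      moreover have "nx n (pv n j) = j" using nx_pv j by auto
      ultimately have "j \<in> nx n ` ?Z" by (metis image_eqI)
      then show ?thesis by (rule UnI1)
    qed
  next
    fix j assume "j \<in> nx n ` ?Z \<union> ?P"
    then show "j \<in> ?O"
    proof
      assume "j \<in> nx n ` ?Z"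
      then obtain i where i: "i < n" "\<not> \<beta> i" "j = nx n i" by auto
      have "j < n" using i nx_lt n by simp
      moreover have "pv n j = i" using i pv_nx by simp
      ultimately show ?thesis using c i by auto
    qed auto
  qed
  have disj: "nx n ` ?Z \<inter> ?P = {}"
  proof (rule ccontr)
    assume "nx n ` ?Z \<inter> ?P \<noteq> {}"
    then obtain i where i: "i < n" "\<not> \<beta> i" "\<beta> (pv n (nx n i))" by auto
    then show False using pv_nx by simp
  qed
  have inj: "inj_on (nx n) ?Z"
    by (rule inj_onI) (metis (no_types, lifting) mem_Collect_eq pv_nx)
  have "card ?O = card (nx n ` ?Z) + card ?P"
    unfolding eq by (rule card_Un_disjoint) (use disj in auto)
  also have "card (nx n ` ?Z) = card ?Z" using inj by (rule card_image)
  finally show ?thesis .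
qed

lemma card_split: "card {j. j < (n::nat) \<and> \<beta> j} + card {j. j < n \<and> \<not> \<beta> j} = n"
proof -
  have "{j. j < n \<and> \<beta> j} \<union> {j. j < n \<and> \<not> \<beta> j} = {..<n}" by auto
  moreover have "card ({j. j < n \<and> \<beta> j} \<union> {j. j < n \<and> \<not> \<beta> j}) = card {j. j < n \<and> \<beta> j} + card {j. j < n \<and> \<not> \<beta> j}"
    by (rule card_Un_disjoint) auto
  ultimately show ?thesis by simp
qed

lemma cyc_ones_lb:
  assumes n: "n > 0" and c: "\<forall>j<n. \<beta> (pv n j) \<or> \<beta> j"
    and p: "i < n" "\<beta> i" "\<beta> (pv n i)"
  shows "n + 1 \<le> 2 * card {j. j < n \<and> \<beta> j}"
proof -
  have "card {j. j < n \<and> \<beta> j \<and> \<beta> (pv n j)} \<ge> 1"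
    using p by (metis (mono_tags, lifting) One_nat_def Suc_leI card_gt_0_iff empty_iff finite_nat_set_iff_bounded mem_Collect_eq)
  then show ?thesis using cyc_count[OF n c] card_split[of n \<beta>] by linarith
qed

lemma cyc_pattern:
  assumes n: "n = 2 * k + 1" and c: "\<forall>j<n. \<beta> (pv n j) \<or> \<beta> j"
    and le: "card {j. j < n \<and> \<beta> j} \<le> k + 1"
  shows "\<exists>s<n. \<forall>q<n. \<beta> ((s + q) mod n) = even q"
proof -
  have n0: "n > 0" using n by simp
  let ?P = "{j. j < n \<and> \<beta> j \<and> \<beta> (pv n j)}"
  have cc: "card {j. j < n \<and> \<beta> j} = card {j. j < n \<and> \<not> \<beta> j} + card ?P" using cyc_count[OF n0 c] .
  have cs: "card {j. j < n \<and> \<beta> j} + card {j. j < n \<and> \<not> \<beta> j} = n" by (rule card_split)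
  have Pa: "card ?P \<le> 1" using cc cs le n by linarith
  have Pb: "card ?P \<noteq> 0"
  proof
    assume "card ?P = 0"
    then have "2 * card {j. j < n \<and> \<not> \<beta> j} = 2 * k + 1" using cc cs n by linarith
    then show False by presburger
  qed
  have P1: "card ?P = 1" using Pa Pb by linarith
  then obtain s where Ps: "?P = {s}" using card_1_singletonE by blast
  have s: "s < n" "\<beta> s" using Ps by auto
  have uq: "\<And>j. j < n \<Longrightarrow> \<beta> j \<Longrightarrow> \<beta> (pv n j) \<Longrightarrow> j = s" using Ps by auto
  have "\<forall>q<n. \<beta> ((s + q) mod n) = even q"
  proof (intro allI impI)
    fix q assume "q < n"
    then show "\<beta> ((s + q) mod n) = even q"
    proof (induction q)
      case 0 then show ?case using s by simp
    next
      case (Suc q)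
      let ?a = "(s + q) mod n" and ?b = "(s + Suc q) mod n"
      have IH: "\<beta> ?a = even q" using Suc by simp
      have b: "?b = nx n ?a" unfolding nx_def by (simp add: mod_Suc_eq)
      have a_lt: "?a < n" using n0 by simp
      have pb: "pv n ?b = ?a" using b pv_nx a_lt by simp
      have b_lt: "?b < n" using n0 by simp
      show ?case
      proof (cases "\<beta> ?a")
        case False
        then have "\<beta> ?b" using c b_lt pb by metis
        then show ?thesis using IH False by simp
      next
        case True
        have "\<not> \<beta> ?b"
        proof
          assume bb: "\<beta> ?b"
          have "\<beta> (pv n ?b)" using pb True by simp
          then have "?b = s" using uq[OF b_lt bb] by simp
          moreover have "?b \<noteq> s"
          proof
            assume e: "?b = s"
            show False
            proof (cases "s + Suc q < n")
              case True then show False using e by simp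
            next
              case False
              then have "(s + Suc q) mod n = s + Suc q - n" using s Suc.prems by (simp add: le_mod_geq)
              then show False using e Suc.prems by simp
            qed
          qed
          ultimately show False by simp
        qed
        then show ?thesis using IH True by simp
      qed
    qed
  qed
  then show ?thesis using s by blast
qed

lemma card_even: "card {j. j < n \<and> even j} = (n + 1) div 2"
proof (induction n)
  case 0 then show ?case by simp
next
  case (Suc n)
  have "{j. j < Suc n \<and> even j} = {j. j < n \<and> even j} \<union> (if even n then {n} else {})" by (auto elim: less_SucE)
  then show ?case using Suc by (auto simp: card_insert_if elim: less_SucE)
qed

lemma card_bij_count:
  fixes n :: nat
  assumes "inj_on e {..<n}" "e ` {..<n} \<subseteq> {..<n}"
  shows "card {j. j < n \<and> Q (e j)} = card {q. q < n \<and> Q q}"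
proof -
  have im: "e ` {..<n} = {..<n}" using endo_inj_surj[OF finite_lessThan assms(2,1)] .
  have "e ` {j. j < n \<and> Q (e j)} = {q. q < n \<and> Q q}"
  proof (intro set_eqI iffI)
    fix q assume "q \<in> e ` {j. j < n \<and> Q (e j)}"
    then show "q \<in> {q. q < n \<and> Q q}" using assms(2) by auto
  next
    fix q assume q: "q \<in> {q. q < n \<and> Q q}"
    then have "q \<in> e ` {..<n}" using im by auto
    then obtain j where "j < n" "q = e j" by auto
    then show "q \<in> e ` {j. j < n \<and> Q (e j)}" using q by auto
  qed
  moreover have "inj_on e {j. j < n \<and> Q (e j)}" using assms(1) by (rule inj_on_subset) auto
  ultimately show ?thesis by (metis card_image)
qed




type_synonym wrd = "nat \<Rightarrow> bool list \<times> bool"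

definition view :: "wrd \<Rightarrow> nat \<Rightarrow> nat \<Rightarrow> (bool list \<times> bool) \<times> (bool list \<times> bool) \<times> bool list" where
  "view f d i = (f (pv d i), f i, fst (f (nx d i)))"

fun okv :: "verifier \<Rightarrow> nat \<Rightarrow> (bool list \<times> bool) \<times> (bool list \<times> bool) \<times> bool list \<Rightarrow> bool" where
  "okv ver r (a, b, l2) \<longleftrightarrow> ver [snd a, snd b] (fst b) [fst a, l2] \<and> (snd a \<or> snd b) \<and> length (fst a) \<le> r \<and> length (fst b) \<le> r"

fun has11 :: "(bool list \<times> bool) \<times> (bool list \<times> bool) \<times> bool list \<Rightarrow> bool" where
  "has11 (a, b, l2) \<longleftrightarrow> snd a \<and> snd b"

definition Good :: "verifier \<Rightarrow> nat \<Rightarrow> wrd \<Rightarrow> nat \<Rightarrow> bool" where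
  "Good ver r f d \<longleftrightarrow> d > 0 \<and> (\<forall>i<d. okv ver r (view f d i)) \<and> (\<exists>i<d. has11 (view f d i))"

lemma pv_eq: "k < e \<Longrightarrow> pv e k = (if k = 0 then e - 1 else k - 1)"
proof -
  assume k: "k < e"
  show ?thesis
  proof (cases "k = 0")
    case True then show ?thesis unfolding pv_def using k by simp
  next
    case False
    then have e1: "k + e - 1 = (k - 1) + e" by simp
    have "pv e k = ((k - 1) + e) mod e" unfolding pv_def e1 ..
    also have "\<dots> = (k - 1) mod e" by (simp only: mod_add_self2)
    also have "\<dots> = k - 1" using k by simp
    finally show ?thesis using False by simp
  qed
qed

lemma nx_eq: "k < e \<Longrightarrow> nx e k = (if k + 1 = e then 0 else k + 1)"
  unfolding nx_def by auto

lemma pv_mod: "d > 0 \<Longrightarrow> pv d (a mod d) = (a + d - 1) mod d"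
proof -
  assume d: "d > 0"
  have "pv d (a mod d) = (a mod d + (d - 1)) mod d" unfolding pv_def using d by simp
  also have "\<dots> = (a + (d - 1)) mod d" by (simp add: mod_add_left_eq)
  finally show ?thesis using d by simp
qed

lemma nx_mod: "nx d (a mod d) = (a + 1) mod d"
  unfolding nx_def by (simp add: mod_Suc_eq)

lemma view1:
  assumes xy: "x < y" "y < d" and st: "f (pv d x) = f (pv d y)" "fst (f x) = fst (f y)" and k: "k < y - x"
  shows "view (\<lambda>k. f (x + k)) (y - x) k = view f d (x + k)"
proof -
  have d0: "d > 0" using xy by simp
  have A: "f (x + pv (y - x) k) = f (pv d (x + k))"
  proof (cases "k = 0")
    case True
    then have "x + pv (y - x) k = y - 1" using pv_eq[OF k] xy by simp
    moreover have "pv d y = y - 1" using pv_eq[of y d] xy by simp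
    ultimately show ?thesis using True st by simp
  next
    case False
    then have "x + pv (y - x) k = x + k - 1" using pv_eq[OF k] by simp
    moreover have "pv d (x + k) = x + k - 1" using pv_eq[of "x + k" d] xy k False by simp
    ultimately show ?thesis by simp
  qed
  have B: "fst (f (x + nx (y - x) k)) = fst (f (nx d (x + k)))"
  proof (cases "k + 1 = y - x")
    case True
    then have "x + nx (y - x) k = x" using nx_eq[OF k] by simp
    moreover have "nx d (x + k) = y" unfolding nx_def using xy True by simp
    ultimately show ?thesis using st by simp
  next
    case False
    then have "x + nx (y - x) k = x + k + 1" using nx_eq[OF k] by simp
    moreover have "nx d (x + k) = x + k + 1" unfolding nx_def using xy k False by simp
    ultimately show ?thesis by simp
  qed
  show ?thesis unfolding view_def using A B by simp
qed

lemma view2: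
  assumes xy: "x < y" "y < d" and st: "f (pv d x) = f (pv d y)" "fst (f x) = fst (f y)" and k: "k < d - y + x"
  shows "view (\<lambda>k. f ((y + k) mod d)) (d - y + x) k = view f d ((y + k) mod d)"
proof -
  have d0: "d > 0" using xy by simp
  have A: "f ((y + pv (d - y + x) k) mod d) = f (pv d ((y + k) mod d))"
  proof (cases "k = 0")
    case True
    then have "(y + pv (d - y + x) k) mod d = (d + x - 1) mod d" using pv_eq[OF k] xy by simp
    moreover have "pv d x = (d + x - 1) mod d" unfolding pv_def by (simp add: add.commute)
    moreover have "(y + k) mod d = y" using True xy by simp
    ultimately show ?thesis using st by simp
  next
    case False
    then have "(y + pv (d - y + x) k) mod d = (y + k - 1) mod d" using pv_eq[OF k] by simp
    moreover have "pv d ((y + k) mod d) = (y + k + d - 1) mod d" using pv_mod d0 by simp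
    moreover have "(y + k + d - 1) mod d = (y + k - 1) mod d"
    proof -
      have "y + k + d - 1 = (y + k - 1) + d" using False by simp
      then show ?thesis by simp
    qed
    ultimately show ?thesis by simp
  qed
  have B: "fst (f ((y + nx (d - y + x) k) mod d)) = fst (f (nx d ((y + k) mod d)))"
  proof (cases "k + 1 = d - y + x")
    case True
    then have "(y + nx (d - y + x) k) mod d = y" using nx_eq[OF k] xy by simp
    moreover have "nx d ((y + k) mod d) = x"
    proof -
      have "nx d ((y + k) mod d) = (y + k + 1) mod d" by (rule nx_mod)
      also have "y + k + 1 = d + x" using True xy by simp
      finally show ?thesis using xy by simp
    qed
    ultimately show ?thesis using st by simp
  next
    case False
    then have "(y + nx (d - y + x) k) mod d = (y + k + 1) mod d" using nx_eq[OF k] by simp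
    moreover have "nx d ((y + k) mod d) = (y + k + 1) mod d" by (rule nx_mod)
    ultimately show ?thesis by simp
  qed
  show ?thesis unfolding view_def using A B by simp
qed

lemma excise:
  assumes G: "Good ver r f d" and xy: "x < y" "y < d" and st: "f (pv d x) = f (pv d y)" "fst (f x) = fst (f y)"
  shows "Good ver r (\<lambda>k. f (x + k)) (y - x) \<or> Good ver r (\<lambda>k. f ((y + k) mod d)) (d - y + x)"
proof -
  have ok: "\<forall>i<d. okv ver r (view f d i)" using G unfolding Good_def by simp
  obtain i where i: "i < d" "has11 (view f d i)" using G unfolding Good_def by blast
  have ok1: "\<forall>k<y - x. okv ver r (view (\<lambda>k. f (x + k)) (y - x) k)"
    using view1[OF xy st] ok xy by simp
  have ok2: "\<forall>k<d - y + x. okv ver r (view (\<lambda>k. f ((y + k) mod d)) (d - y + x) k)"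
    using view2[OF xy st] ok xy by simp
  show ?thesis
  proof (cases "x \<le> i \<and> i < y")
    case True
    have ix: "i - x < y - x" using True by arith
    have "view (\<lambda>k. f (x + k)) (y - x) (i - x) = view f d i" using view1[OF xy st ix] True by simp
    then have "has11 (view (\<lambda>k. f (x + k)) (y - x) (i - x))" using i by simp
    then have "Good ver r (\<lambda>k. f (x + k)) (y - x)" unfolding Good_def using ok1 xy True
      by (metis diff_less_mono zero_less_diff)
    then show ?thesis by simp
  next
    case False
    define k where "k = (if i \<ge> y then i - y else i + d - y)"
    have k: "k < d - y + x" using False i xy unfolding k_def by auto
    have "(y + k) mod d = i" using False i xy unfolding k_def by auto
    then have "has11 (view (\<lambda>k. f ((y + k) mod d)) (d - y + x) k)" using view2[OF xy st k] i by simp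
    then have "Good ver r (\<lambda>k. f ((y + k) mod d)) (d - y + x)" unfolding Good_def using ok2 k by auto
    then show ?thesis by simp
  qed
qed

definition Lr :: "nat \<Rightarrow> bool list set" where "Lr r = {l. length l \<le> r}"

lemma Lr_card: "finite (Lr r) \<and> card (Lr r) \<le> 2 ^ (r + 1)"
proof -
  have e: "Lr r = {xs. set xs \<subseteq> (UNIV::bool set) \<and> length xs \<le> r}" unfolding Lr_def by simp
  have f: "finite (Lr r)" unfolding e by (rule finite_lists_length_le) simp
  have c: "card (Lr r) = (\<Sum>i\<le>r. 2 ^ i)" unfolding e by (subst card_lists_length_le) simp_all
  have "(\<Sum>i\<le>r. (2::nat) ^ i) < 2 ^ (r + 1)" by (induction r) auto
  then show ?thesis using f c by simp
qed

definition Tset :: "nat \<Rightarrow> ((bool list \<times> bool) \<times> bool list) set" where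
  "Tset r = (Lr r \<times> UNIV) \<times> Lr r"

lemma T_card: "finite (Tset r) \<and> card (Tset r) \<le> 2 ^ (2 * r + 3)"
proof -
  have f: "finite (Tset r)" unfolding Tset_def using Lr_card by simp
  have "card (Tset r) = card (Lr r) * 2 * card (Lr r)" unfolding Tset_def by (simp add: card_cartesian_product)
  also have "\<dots> \<le> 2 ^ (r + 1) * 2 * 2 ^ (r + 1)" using Lr_card by (intro mult_mono) auto
  also have "\<dots> = 2 ^ (2 * r + 3)"
  proof -
    have e: "2 * r + 3 = (r + 1) + 1 + (r + 1)" by simp
    show ?thesis unfolding e power_add by simp
  qed
  finally show ?thesis using f by simp
qed

lemma shrink:
  "Good ver r f d \<Longrightarrow> \<exists>g d'. Good ver r g d' \<and> d' \<le> card (Tset r)"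
proof (induction d arbitrary: f rule: less_induct)
  case (less d)
  show ?case
  proof (cases "d \<le> card (Tset r)")
    case True then show ?thesis using less.prems by blast
  next
    case False
    define st where "st i = (f (pv d i), fst (f i))" for i
    have d0: "d > 0" using less.prems unfolding Good_def by simp
    have sub: "st ` {..<d} \<subseteq> Tset r"
    proof
      fix z assume "z \<in> st ` {..<d}"
      then obtain i where i: "i < d" "z = st i" by auto
      have "okv ver r (view f d i)" using less.prems i unfolding Good_def by blast
      then show "z \<in> Tset r" unfolding Tset_def Lr_def st_def view_def i by (cases "f (pv d i)") auto
    qed
    have "\<not> inj_on st {..<d}"
    proof
      assume "inj_on st {..<d}"
      then have "card (st ` {..<d}) = d" by (simp add: card_image)
      moreover have "card (st ` {..<d}) \<le> card (Tset r)" using sub T_card by (intro card_mono) auto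
      ultimately show False using False by simp
    qed
    then obtain a b where ab: "a < d" "b < d" "a \<noteq> b" "st a = st b" unfolding inj_on_def by auto
    define x where "x = min a b"
    define y where "y = max a b"
    have xy: "x < y" "y < d" "st x = st y" using ab unfolding x_def y_def by (auto simp: min_def max_def)
    have st2: "f (pv d x) = f (pv d y)" "fst (f x) = fst (f y)" using xy(3) unfolding st_def by auto
    from excise[OF less.prems xy(1,2) st2] show ?thesis
    proof
      assume "Good ver r (\<lambda>k. f (x + k)) (y - x)"
      moreover have "y - x < d" using xy by simp
      ultimately show ?thesis using less.IH by blast
    next
      assume "Good ver r (\<lambda>k. f ((y + k) mod d)) (d - y + x)"
      moreover have "d - y + x < d" using xy by simp
      ultimately show ?thesis using less.IH by blast
    qed
  qed
qed




lemma rg_feasible: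
  assumes M: "M \<ge> 3" and c: "\<forall>j<M. \<beta> (pv M j) \<or> \<beta> j"
  shows "ec_feasible (Rg M, \<lambda>_. [], rgout M \<beta>) \<and> ec_size (Rg M, \<lambda>_. [], rgout M \<beta>) = int (card {j. j < M \<and> \<beta> j})"
proof -
  have R: "ringS (Rg M) [0..<M] M" using Rg_ringS M by blast
  have O: "outrel (Rg M) [0..<M] M (rgout M \<beta>) \<beta>" using Rg_outrel M by blast
  show ?thesis using enc_outrel[OF R O] cover_outrel[OF R O c] card_outrel[OF R O] by simp
qed

lemma rg_lb:
  assumes M: "M \<ge> 3" and f: "ec_feasible (Rg M, I, Out)"
  shows "M \<le> 2 * card (ec_set (Rg M) Out)"
proof -
  have "is_edge_cover (Rg M) (ec_set (Rg M) Out)" using f by simp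
  then have "card (verts (Rg M)) \<le> 2 * card (ec_set (Rg M) Out)" by (intro cover_lb) auto
  then show ?thesis by simp
qed

lemma even_ok: "M > 0 \<Longrightarrow> \<forall>j<M. even (pv M j) \<or> even j"
proof (intro allI impI)
  fix j assume M: "M > 0" and j: "j < M"
  show "even (pv M j) \<or> even j"
  proof (cases "j = 0")
    case True then show ?thesis by simp
  next
    case False
    then have "pv M j = j - 1" using pv_eq[OF j] by simp
    then show ?thesis using False by (cases "even j") auto
  qed
qed

lemma view_period:
  assumes d: "d > 0" and t: "t > 0"
  shows "view (\<lambda>i. g (i mod d)) (d * t) i = view g d (i mod d)"
proof -
  let ?M = "d * t"
  have M0: "?M > 0" using d t by simp
  have A: "(pv ?M i) mod d = pv d (i mod d)"
  proof -
    have "(pv ?M i) mod d = (i + ?M - 1) mod d" unfolding pv_def by (simp add: mod_mod_cancel)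
    also have "i + ?M - 1 = (i + d - 1) + d * (t - 1)"
    proof -
      have "d * t = d + d * (t - 1)" using t by (metis Suc_diff_1 mult_Suc_right)
      then show ?thesis using d by simp
    qed
    also have "((i + d - 1) + d * (t - 1)) mod d = (i + d - 1) mod d" by simp
    also have "\<dots> = pv d (i mod d)" using pv_mod[OF d] by simp
    finally show ?thesis .
  qed
  have B: "(nx ?M i) mod d = nx d (i mod d)"
    unfolding nx_mod unfolding nx_def by (simp add: mod_mod_cancel)
  show ?thesis unfolding view_def using A B by simp
qed

lemma partA:
  assumes k1: "\<kappa> \<ge> 1" and big: "2 ^ (2 * r + 3) < \<kappa>"
  shows "\<not> has_APLS_min ec_feasible ec_size (\<lambda>G. odd_girth_ge G (2 * \<kappa> + 1)) ((real \<kappa> + 1) / real \<kappa>) r"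
proof
  assume "has_APLS_min ec_feasible ec_size (\<lambda>G. odd_girth_ge G (2 * \<kappa> + 1)) ((real \<kappa> + 1) / real \<kappa>) r"
  then obtain ver where
    yes: "\<forall>x \<in> APLS_yes ec_feasible ec_size (\<lambda>G. odd_girth_ge G (2 * \<kappa> + 1)).
            \<exists>L. (\<forall>v \<in> verts (fst x). length (L v) \<le> r) \<and> accepts ver x L" and
    no: "\<forall>x \<in> APLS_no_min ec_feasible ec_size (\<lambda>G. odd_girth_ge G (2 * \<kappa> + 1)) ((real \<kappa> + 1) / real \<kappa>). \<forall>L. \<not> accepts ver x L"
    unfolding has_APLS_min_def has_GPLS_def by blast
  define N where "N = 2 * \<kappa> + 1"
  have N3: "N \<ge> 3" using k1 N_def by simp
  have N0: "N > 0" using N3 by simp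
  have evN: "\<forall>j<N. even (pv N j) \<or> even j" using even_ok N0 by blast
  have Yf: "ec_feasible (Rg N, \<lambda>_. [], rgout N even)" and
    Ys: "ec_size (Rg N, \<lambda>_. [], rgout N even) = int (card {j. j < N \<and> even j})"
    using rg_feasible[OF N3 evN] by auto
  have cN: "card {j. j < N \<and> even j} = \<kappa> + 1" using card_even N_def by simp
  have Yopt: "ec_size (Rg N, \<lambda>_. [], rgout N even) = OPT_min ec_feasible ec_size (Rg N) (\<lambda>_. [])"
  proof (rule OPT_eq[symmetric])
    show "ec_feasible (Rg N, \<lambda>_. [], rgout N even)" by (rule Yf)
    fix O' assume "ec_feasible (Rg N, \<lambda>_. [], O')"
    then have "N \<le> 2 * card (ec_set (Rg N) O')" using rg_lb N3 by blast
    then show "ec_size (Rg N, \<lambda>_. [], rgout N even) \<le> ec_size (Rg N, \<lambda>_. [], O')" using Ys cN N_def by simp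
  qed
  have Yyes: "(Rg N, \<lambda>_. [], rgout N even) \<in> APLS_yes ec_feasible ec_size (\<lambda>G. odd_girth_ge G (2 * \<kappa> + 1))"
    unfolding APLS_yes_def APLS_universe_def using Rg_valid[OF N3] Rg_odd_girth[OF N3] Yf Yopt N_def by auto
  obtain L where Ll: "\<forall>v \<in> verts (Rg N). length (L v) \<le> r" and La: "accepts ver (Rg N, \<lambda>_. [], rgout N even) L"
    using yes Yyes by fastforce
  define f where "f i = (L i, even i)" for i
  have Gf: "Good ver r f N"
    unfolding Good_def
  proof (intro conjI allI impI)
    show "N > 0" by (rule N0)
    fix i assume i: "i < N"
    have p: "pv N i < N" "nx N i < N" using pv_lt nx_lt N0 by auto
    have "ver ([] @ rgout N even i) (L i) (map L (nbrs (Rg N) i))" using La i unfolding accepts_def by simp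
    then have "ver [even (pv N i), even i] (L i) [L (pv N i), L (nx N i)]" unfolding rgout_def by simp
    then show "okv ver r (view f N i)" unfolding view_def f_def using evN i Ll p by auto
  next
    have "pv N 0 = 2 * \<kappa>" unfolding pv_def N_def by simp
    then have "has11 (view f N 0)" unfolding view_def f_def by simp
    then show "\<exists>i<N. has11 (view f N i)" using N0 by blast
  qed
  obtain g d where Gg: "Good ver r g d" and dT: "d \<le> card (Tset r)" using shrink[OF Gf] by blast
  have dk: "d < \<kappa>" using dT T_card big by (meson le_less_trans)
  have d0: "d > 0" using Gg unfolding Good_def by simp
  define K where "K = 2 * (2 * \<kappa> + 1)"
  define M where "M = d * K"
  define h where "h i = g (i mod d)" for i
  define \<beta> where "\<beta> i = snd (h i)" for i
  define Lh where "Lh i = fst (h i)" for i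
  have K0: "K > 0" unfolding K_def by simp
  have vp: "\<And>i. view h M i = view g d (i mod d)" unfolding h_def M_def using view_period[OF d0 K0] by blast
  have KM: "K \<le> M" unfolding M_def using d0 by simp
  have K3: "K \<ge> 3" unfolding K_def using k1 by simp
  have M3: "M \<ge> 3" using KM K3 by linarith
  have M0: "M > 0" using M3 by simp
  have okh: "\<And>i. okv ver r (view h M i)" using Gg vp d0 unfolding Good_def by simp
  have vh: "\<And>i. view h M i = ((Lh (pv M i), \<beta> (pv M i)), (Lh i, \<beta> i), Lh (nx M i))"
    unfolding view_def Lh_def \<beta>_def by simp
  have cM: "\<forall>j<M. \<beta> (pv M j) \<or> \<beta> j" using okh vh by (metis fst_conv okv.simps snd_conv)
  have Xf: "ec_feasible (Rg M, \<lambda>_. [], rgout M \<beta>)" and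
    Xs: "ec_size (Rg M, \<lambda>_. [], rgout M \<beta>) = int (card {j. j < M \<and> \<beta> j})"
    using rg_feasible[OF M3 cM] by auto
  have "\<forall>v\<in>verts (Rg M). ver ([] @ rgout M \<beta> v) (Lh v) (map Lh (nbrs (Rg M) v))"
  proof
    fix v assume "v \<in> verts (Rg M)"
    have "okv ver r (view h M v)" by (rule okh)
    then show "ver ([] @ rgout M \<beta> v) (Lh v) (map Lh (nbrs (Rg M) v))" unfolding vh rgout_def by simp
  qed
  then have Xacc: "accepts ver (Rg M, \<lambda>_. [], rgout M \<beta>) Lh"
    unfolding accepts_def by simp
  obtain i0 where i0: "i0 < d" "has11 (view g d i0)" using Gg unfolding Good_def by blast
  let ?P = "{j. j < M \<and> \<beta> j \<and> \<beta> (pv M j)}"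
  have sub: "(\<lambda>t. i0 + t * d) ` {..<K} \<subseteq> ?P"
  proof
    fix j assume "j \<in> (\<lambda>t. i0 + t * d) ` {..<K}"
    then obtain t where t: "t < K" "j = i0 + t * d" by auto
    have jM: "j < M"
    proof -
      have "i0 + t * d < d + t * d" using i0 by simp
      also have "\<dots> = (t + 1) * d" by simp
      also have "\<dots> \<le> K * d" using t by (intro mult_right_mono) auto
      finally show ?thesis unfolding M_def t by (simp add: mult.commute)
    qed
    have "j mod d = i0" using t i0 by simp
    then have "has11 (view h M j)" using vp i0 by simp
    then show "j \<in> ?P" using jM unfolding vh by simp
  qed
  have "inj_on (\<lambda>t. i0 + t * d) {..<K}" using d0 by (intro inj_onI) simp
  then have "card ((\<lambda>t. i0 + t * d) ` {..<K}) = K" by (simp add: card_image)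
  moreover have "finite ?P" by simp
  ultimately have PK: "K \<le> card ?P" using sub by (metis card_mono)
  have ones: "M + K \<le> 2 * card {j. j < M \<and> \<beta> j}"
    using cyc_count[OF M0 cM] card_split[of M \<beta>] PK by linarith
  have evM: "\<forall>j<M. even (pv M j) \<or> even j" using even_ok M0 by blast
  have Mf: "ec_feasible (Rg M, \<lambda>_. [], rgout M even)" and
    Ms: "ec_size (Rg M, \<lambda>_. [], rgout M even) = int (card {j. j < M \<and> even j})"
    using rg_feasible[OF M3 evM] by auto
  have Meven: "even M" unfolding M_def K_def by simp
  have cMe: "2 * card {j. j < M \<and> even j} = M" using card_even[of M] Meven by simp
  have opt: "OPT_min ec_feasible ec_size (Rg M) (\<lambda>_. []) \<le> ec_size (Rg M, \<lambda>_. [], rgout M even)"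
    using OPT_le[of ec_feasible "Rg M" "\<lambda>_. []" "rgout M even" ec_size "rgout M even"] Mf ec_size_nonneg by blast
  define S where "S = card {j. j < M \<and> \<beta> j}"
  define Q where "Q = OPT_min ec_feasible ec_size (Rg M) (\<lambda>_. [])"
  have Q: "2 * Q \<le> int M" using opt Ms cMe unfolding Q_def by linarith
  have S: "int M + int K \<le> 2 * int S" using ones unfolding S_def by linarith
  have dK: "int M < int \<kappa> * int K" unfolding M_def using dk K0 by simp
  have key: "real_of_int (int S) > (real \<kappa> + 1) / real \<kappa> * real_of_int Q"
  proof -
    have kpos: "real \<kappa> > 0" using k1 by simp
    have Qr: "2 * real_of_int Q \<le> real M"
    proof -
      have "real_of_int (2 * Q) \<le> real_of_int (int M)" using Q by (simp only: of_int_le_iff)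
      then show ?thesis by simp
    qed
    have Sr: "real M + real K \<le> 2 * real S"
    proof -
      have "real_of_int (int M + int K) \<le> real_of_int (2 * int S)" using S by (simp only: of_int_le_iff)
      then show ?thesis by simp
    qed
    have dKr: "real M < real \<kappa> * real K"
    proof -
      have "real_of_int (int M) < real_of_int (int \<kappa> * int K)" using dK by (simp only: of_int_less_iff)
      then show ?thesis by simp
    qed
    have a: "(real \<kappa> + 1) * (2 * real_of_int Q) \<le> (real \<kappa> + 1) * real M" using Qr by (intro mult_left_mono) auto
    have b: "real \<kappa> * (real M + real K) \<le> real \<kappa> * (2 * real S)" using Sr by (intro mult_left_mono) auto
    have c: "(real \<kappa> + 1) * real M < real \<kappa> * (real M + real K)" using dKr by (simp add: algebra_simps)
    have "(real \<kappa> + 1) * (2 * real_of_int Q) < real \<kappa> * (2 * real S)" using a b c by linarith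
    then have "(real \<kappa> + 1) * real_of_int Q < real \<kappa> * real S" by simp
    then show ?thesis using kpos by (simp add: field_simps)
  qed
  have Xno: "(Rg M, \<lambda>_. [], rgout M \<beta>) \<in> APLS_no_min ec_feasible ec_size (\<lambda>G. odd_girth_ge G (2 * \<kappa> + 1)) ((real \<kappa> + 1) / real \<kappa>)"
  proof -
    have og: "odd_girth_ge (Rg M) (2 * \<kappa> + 1)"
    proof (rule Rg_odd_girth[OF M3])
      have "2 * \<kappa> + 1 \<le> K" unfolding K_def by simp
      also have "K \<le> M" unfolding M_def using d0 by simp
      finally show "2 * \<kappa> + 1 \<le> M" .
    qed
    show ?thesis unfolding APLS_no_min_def APLS_universe_def
      using Rg_valid[OF M3] og Xf Xs key unfolding S_def Q_def by auto
  qed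
  show False using no Xno Xacc by blast
qed




lemma mod_add_cancel_left_nat:
  fixes a j k n :: nat
  assumes "(a + j) mod n = (a + k) mod n" "j < n" "k < n"
  shows "j = k"
proof -
  have "int (a + j) mod int n = int (a + k) mod int n" using assms(1) by (metis of_nat_mod)
  then have "(int a + int j) mod int n = (int a + int k) mod int n" by simp
  then have "((int a + int j) - int a) mod int n = ((int a + int k) - int a) mod int n"
    by (rule mod_diff_cong) simp
  then have "int j mod int n = int k mod int n" by simp
  then show ?thesis using assms(2,3) by simp
qed

locale wordp =
  fixes n :: nat and W :: "nat \<Rightarrow> 'a"
  assumes n3: "n \<ge> 3"
    and D1: "p < n \<Longrightarrow> W p \<noteq> W (nx n p)"
    and D2: "p < n \<Longrightarrow> W (pv n p) \<noteq> W (nx n p)"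
    and U: "p < n \<Longrightarrow> q < n \<Longrightarrow> {W p, W (nx n p)} = {W q, W (nx n q)} \<Longrightarrow> p = q"
begin

lemma n0: "n > 0" using n3 by simp

definition H :: "(nat \<Rightarrow> 'a) \<Rightarrow> (nat \<Rightarrow> nat) \<Rightarrow> (nat \<Rightarrow> bool) \<Rightarrow> nat \<Rightarrow> bool" where
  "H lb pos ori j \<longleftrightarrow> pos j < n \<and> lb j = W (pos j) \<and>
     (ori j \<longrightarrow> lb (nx n j) = W (nx n (pos j)) \<and> lb (pv n j) = W (pv n (pos j))) \<and>
     (\<not> ori j \<longrightarrow> lb (nx n j) = W (pv n (pos j)) \<and> lb (pv n j) = W (nx n (pos j)))"

lemma step:
  assumes HH: "\<forall>j<n. H lb pos ori j" and j: "j < n"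
  shows "(ori j \<longrightarrow> ori (nx n j) \<and> pos (nx n j) = nx n (pos j)) \<and>
         (\<not> ori j \<longrightarrow> \<not> ori (nx n j) \<and> pos (nx n j) = pv n (pos j))"
proof -
  let ?j' = "nx n j"
  have j': "?j' < n" using nx_lt n0 by simp
  have Hj: "H lb pos ori j" and Hj': "H lb pos ori ?j'" using HH j j' by auto
  have pj: "pos j < n" "pos ?j' < n" using Hj Hj' unfolding H_def by auto
  have pvj': "pv n ?j' = j" using pv_nx j by simp
  have ppj: "pv n (pos j) < n" "nx n (pos j) < n" "pv n (pos ?j') < n" "nx n (pos ?j') < n" using pv_lt nx_lt n0 by auto
  have l1: "lb j = W (pos j)" "lb ?j' = W (pos ?j')" using Hj Hj' unfolding H_def by auto
  show ?thesis
  proof (intro conjI impI)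
    assume oj: "ori j"
    have a: "lb ?j' = W (nx n (pos j))" using Hj oj unfolding H_def by simp
    show "ori ?j'"
    proof (rule ccontr)
      assume no: "\<not> ori ?j'"
      have "lb j = W (nx n (pos ?j'))" using Hj' no pvj' unfolding H_def by simp
      then have "{W (pos ?j'), W (nx n (pos ?j'))} = {W (pos j), W (nx n (pos j))}" using l1 a by auto
      then have "pos ?j' = pos j" using U pj by blast
      then have "W (pos j) = W (nx n (pos j))" using l1 a by simp
      then show False using D1 pj by blast
    qed
    then have "lb j = W (pv n (pos ?j'))" using Hj' pvj' unfolding H_def by simp
    then have "{W (pv n (pos ?j')), W (nx n (pv n (pos ?j')))} = {W (pos j), W (nx n (pos j))}"
      using l1 a nx_pv pj by auto
    then have "pv n (pos ?j') = pos j" using U pj ppj by blast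
    then show "pos ?j' = nx n (pos j)" using nx_pv pj by metis
  next
    assume oj: "\<not> ori j"
    have a: "lb ?j' = W (pv n (pos j))" using Hj oj unfolding H_def by simp
    show "\<not> ori ?j'"
    proof
      assume yo: "ori ?j'"
      have "lb j = W (pv n (pos ?j'))" using Hj' yo pvj' unfolding H_def by simp
      then have "{W (pv n (pos ?j')), W (nx n (pv n (pos ?j')))} = {W (pv n (pos j)), W (nx n (pv n (pos j)))}"
        using l1 a nx_pv pj by auto
      then have "pv n (pos ?j') = pv n (pos j)" using U ppj by blast
      then have "pos ?j' = pos j" using nx_pv pj by metis
      then have "W (pv n (pos j)) = W (nx n (pv n (pos j)))" using l1 a nx_pv pj by simp
      then show False using D1 ppj by blast
    qed
    then have "lb j = W (nx n (pos ?j'))" using Hj' pvj' unfolding H_def by simp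
    then have "{W (pos ?j'), W (nx n (pos ?j'))} = {W (pv n (pos j)), W (nx n (pv n (pos j)))}"
      using l1 a nx_pv pj by auto
    then show "pos ?j' = pv n (pos j)" using U pj ppj by blast
  qed
qed

lemma o_const:
  assumes HH: "\<forall>j<n. H lb pos ori j"
  shows "j < n \<Longrightarrow> ori j = ori 0"
proof (induction j)
  case 0 then show ?case by simp
next
  case (Suc j)
  have j: "j < n" using Suc by simp
  have nj: "nx n j = Suc j" unfolding nx_def using Suc by simp
  have oj: "ori j = ori 0" using Suc.IH j by simp
  have st: "(ori j \<longrightarrow> ori (Suc j)) \<and> (\<not> ori j \<longrightarrow> \<not> ori (Suc j))" using step[OF HH j] nj by simp
  show ?case using oj st by blast
qed

definition e :: "(nat \<Rightarrow> nat) \<Rightarrow> (nat \<Rightarrow> bool) \<Rightarrow> nat \<Rightarrow> nat" where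
  "e pos ori j = (if ori j then pos j else pv n (pos j))"

lemma e_lt: "\<forall>j<n. H lb pos ori j \<Longrightarrow> j < n \<Longrightarrow> e pos ori j < n"
  unfolding e_def H_def using pv_lt n0 by auto

lemma e_step:
  assumes HH: "\<forall>j<n. H lb pos ori j" and j: "j < n"
  shows "e pos ori (nx n j) = (if ori 0 then nx n (e pos ori j) else pv n (e pos ori j))"
proof -
  have j': "nx n j < n" using nx_lt n0 by simp
  have oc: "ori j = ori 0" "ori (nx n j) = ori 0" using o_const[OF HH j] o_const[OF HH j'] by auto
  show ?thesis
  proof (cases "ori 0")
    case True then show ?thesis using step[OF HH j] oc unfolding e_def by simp
  next
    case False then show ?thesis using step[OF HH j] oc unfolding e_def by simp
  qed
qed

lemma e_formula:
  assumes HH: "\<forall>j<n. H lb pos ori j"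
  shows "j < n \<Longrightarrow> (if ori 0 then e pos ori j = (e pos ori 0 + j) mod n else (e pos ori j + j) mod n = e pos ori 0)"
proof (induction j)
  case 0
  have "e pos ori 0 < n" using e_lt[OF HH] n0 by simp
  then show ?case by simp
next
  case (Suc j)
  have j: "j < n" using Suc by simp
  have nj: "nx n j = Suc j" unfolding nx_def using Suc by simp
  have es: "e pos ori (Suc j) = (if ori 0 then nx n (e pos ori j) else pv n (e pos ori j))" using e_step[OF HH j] nj by simp
  have ej: "e pos ori j < n" using e_lt[OF HH j] .
  show ?case
  proof (cases "ori 0")
    case True
    then have "e pos ori j = (e pos ori 0 + j) mod n" using Suc j by simp
    then show ?thesis using True es unfolding nx_def by (simp add: mod_Suc_eq)
  next
    case False
    then have ih: "(e pos ori j + j) mod n = e pos ori 0" using Suc j by simp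
    have "pv n (e pos ori j) + 1 = e pos ori j \<or> (pv n (e pos ori j) + 1 = n \<and> e pos ori j = 0)"
      using ej pv_eq[OF ej] n0 by (cases "e pos ori j = 0") auto
    then have "(pv n (e pos ori j) + Suc j) mod n = (e pos ori j + j) mod n"
    proof
      assume a: "pv n (e pos ori j) + 1 = e pos ori j"
      have "pv n (e pos ori j) + Suc j = e pos ori j + j" using a by linarith
      then show ?thesis by (simp only:)
    next
      assume a: "pv n (e pos ori j) + 1 = n \<and> e pos ori j = 0"
      then have "pv n (e pos ori j) + Suc j = j + n" by linarith
      then have "(pv n (e pos ori j) + Suc j) mod n = (j + n) mod n" by (simp only:)
      then show ?thesis using a by simp
    qed
    then show ?thesis using False es ih by simp
  qed
qed

lemma e_inj:
  assumes HH: "\<forall>j<n. H lb pos ori j"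
  shows "inj_on (e pos ori) {..<n}"
proof (rule inj_onI)
  fix j k assume j: "j \<in> {..<n}" and k: "k \<in> {..<n}" and eq: "e pos ori j = e pos ori k"
  have j': "j < n" and k': "k < n" using j k by auto
  show "j = k"
  proof (cases "ori 0")
    case True
    then have "(e pos ori 0 + j) mod n = (e pos ori 0 + k) mod n" using e_formula[OF HH j'] e_formula[OF HH k'] eq by simp
    then show ?thesis using mod_add_cancel_left_nat j' k' by blast
  next
    case False
    then have "(e pos ori j + j) mod n = (e pos ori j + k) mod n" using e_formula[OF HH j'] e_formula[OF HH k'] eq by simp
    then show ?thesis using mod_add_cancel_left_nat j' k' by blast
  qed
qed

lemma e_prev:
  assumes HH: "\<forall>j<n. H lb pos ori j" and j: "j < n"
  shows "e pos ori (pv n j) = (if ori j then pv n (pos j) else pos j)"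
proof -
  have pj: "pv n j < n" using pv_lt n0 by simp
  have es: "e pos ori j = (if ori 0 then nx n (e pos ori (pv n j)) else pv n (e pos ori (pv n j)))"
    using e_step[OF HH pj] nx_pv j by simp
  have oc: "ori j = ori 0" using o_const[OF HH j] .
  have el: "e pos ori (pv n j) < n" using e_lt[OF HH pj] .
  have posl: "pos j < n" using HH j unfolding H_def by simp
  show ?thesis
  proof (cases "ori j")
    case True
    then have "pos j = nx n (e pos ori (pv n j))" using es oc unfolding e_def by simp
    then show ?thesis using True pv_nx el by simp
  next
    case False
    then have "pv n (pos j) = pv n (e pos ori (pv n j))" using es oc unfolding e_def by simp
    then have "nx n (pv n (pos j)) = nx n (pv n (e pos ori (pv n j)))" by simp
    then show ?thesis using False nx_pv el posl by simp
  qed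
qed

end




definition acode :: "nat \<Rightarrow> nat \<Rightarrow> nat" where "acode Q j = 2 * (j div Q) + j mod 2"
definition bcode :: "nat \<Rightarrow> nat \<Rightarrow> nat" where "bcode Q j = Q + j mod Q"
definition code :: "nat \<Rightarrow> nat \<Rightarrow> nat \<Rightarrow> nat" where
  "code k Q p = (if p = 2 * k then 2 * Q else if even p then acode Q (p div 2) else bcode Q (p div 2))"

definition lo :: "nat \<Rightarrow> nat \<Rightarrow> nat \<Rightarrow> nat" where
  "lo k Q p = (if p = 2 * k then 0 else if p = 2 * k - 1 then bcode Q (k - 1)
               else if even p then acode Q (p div 2) else acode Q (p div 2 + 1))"
definition hi :: "nat \<Rightarrow> nat \<Rightarrow> nat \<Rightarrow> nat" where
  "hi k Q p = (if p \<ge> 2 * k - 1 then 2 * Q else bcode Q (p div 2))"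

locale codep =
  fixes k Q :: nat
  assumes k1: "k \<ge> 1" and Q2: "Q \<ge> 2" and Qe: "even Q" and kQ: "2 * k \<le> Q * Q"
begin

abbreviation "n \<equiv> 2 * k + 1"

lemma acode_lt: "j < k \<Longrightarrow> acode Q j < Q"
proof -
  assume j: "j < k"
  obtain h where h: "Q = 2 * h" using Qe by blast
  have "2 * j < Q * Q" using j kQ by linarith
  then have "j < Q * h" using h by simp
  then have "j div Q < h" using Q2 by (simp add: div_less_iff_less_mult mult.commute)
  then have "2 * (j div Q) + j mod 2 < 2 * h" by linarith
  then show ?thesis unfolding acode_def h by simp
qed

lemma bcode_b: "Q \<le> bcode Q j \<and> bcode Q j < 2 * Q"
  unfolding bcode_def using Q2 by simp

lemma acode_par: "acode Q j mod 2 = j mod 2" unfolding acode_def by simp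

lemma bcode_par: "(bcode Q j - Q) mod 2 = j mod 2"
  unfolding bcode_def using Qe by (simp add: mod_mod_cancel)

lemma acode_inj: "acode Q j = acode Q j' \<Longrightarrow> j mod Q = j' mod Q \<Longrightarrow> j = j'"
proof -
  assume a: "acode Q j = acode Q j'" and m: "j mod Q = j' mod Q"
  have aux: "\<And>a b e e'. 2 * a + e = 2 * b + e' \<Longrightarrow> e < 2 \<Longrightarrow> e' < 2 \<Longrightarrow> (a::nat) = b" by presburger
  have "j div Q = j' div Q" using a aux[of "j div Q" "j mod 2" "j' div Q" "j' mod 2"] unfolding acode_def by simp
  then show "j = j'" using m by (metis div_mult_mod_eq)
qed

lemma code_top: "code k Q (2 * k) = 2 * Q" unfolding code_def by simp
lemma code_ev: "2 * j < 2 * k \<Longrightarrow> code k Q (2 * j) = acode Q j" unfolding code_def by simp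
lemma code_od: "2 * j + 1 < 2 * k \<Longrightarrow> code k Q (2 * j + 1) = bcode Q j" unfolding code_def by simp

lemma code_lt: "p < n \<Longrightarrow> code k Q p < 2 * Q + 1"
proof -
  assume p: "p < n"
  show ?thesis
  proof (cases "p = 2 * k")
    case True then show ?thesis using code_top by simp
  next
    case False
    then have pk: "p < 2 * k" using p by simp
    show ?thesis
    proof (cases "even p")
      case True
      then obtain j where j: "p = 2 * j" by blast
      then show ?thesis using code_ev pk acode_lt[of j] by simp
    next
      case False
      then obtain j where j: "p = 2 * j + 1" using oddE by blast
      then show ?thesis using code_od pk bcode_b[of j] by simp
    qed
  qed
qed

lemma classes:
  assumes p: "p < n"
  obtains (a) "p = 2 * k" | (b) "p = 2 * k - 1" | (c) j where "p = 2 * j" "p < 2 * k - 1" | (d) j where "p = 2 * j + 1" "p < 2 * k - 1"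
proof -
  consider "p = 2 * k" | "p = 2 * k - 1" | "p < 2 * k - 1" using p by linarith
  then show ?thesis
  proof cases
    case 3
    show ?thesis
    proof (cases "even p")
      case True then obtain j where "p = 2 * j" by blast
      then show ?thesis using 3 that by blast
    next
      case False then obtain j where "p = 2 * j + 1" using oddE by blast
      then show ?thesis using 3 that by blast
    qed
  qed (use that in blast)+
qed

lemma pair_eq: "p < n \<Longrightarrow> {code k Q p, code k Q (nx n p)} = {lo k Q p, hi k Q p}"
proof -
  assume p: "p < n"
  have nxp: "p < 2 * k \<Longrightarrow> nx n p = p + 1" unfolding nx_def by simp
  from p show ?thesis
  proof (cases rule: classes)
    case a
    have "nx n p = 0" unfolding nx_def a by simp
    moreover have "code k Q 0 = 0" using code_ev[of 0] k1 unfolding acode_def by simp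
    ultimately show ?thesis unfolding lo_def hi_def using a code_top by (simp add: insert_commute)
  next
    case b
    have pe: "p = 2 * (k - 1) + 1" using b k1 by simp
    have pn: "p \<noteq> 2 * k" using b k1 by simp
    have l: "lo k Q p = bcode Q (k - 1)" unfolding lo_def using b pn by simp
    have h: "hi k Q p = 2 * Q" unfolding hi_def using b by simp
    have c1: "code k Q p = bcode Q (k - 1)" using code_od[of "k - 1"] pe k1 by simp
    have c2: "code k Q (nx n p) = 2 * Q" using nxp b k1 code_top by simp
    show ?thesis using l h c1 c2 by simp
  next
    case (c j)
    have "nx n p = 2 * j + 1" using nxp c by simp
    then show ?thesis unfolding lo_def hi_def using c code_ev[of j] code_od[of j] by auto
  next
    case (d j)
    have "nx n p = 2 * (j + 1)" using nxp d by simp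
    then show ?thesis unfolding lo_def hi_def using d code_ev[of "j + 1"] code_od[of j] by auto
  qed
qed

lemma lo_hi: "p < n \<Longrightarrow> lo k Q p < hi k Q p"
proof -
  assume p: "p < n"
  from p show ?thesis
  proof (cases rule: classes)
    case a then show ?thesis unfolding lo_def hi_def using Q2 by simp
  next
    case b then show ?thesis unfolding lo_def hi_def using bcode_b[of "k - 1"] k1 by simp
  next
    case (c j)
    have "acode Q j < Q" using acode_lt c by simp
    then show ?thesis unfolding lo_def hi_def using c bcode_b[of j] by auto
  next
    case (d j)
    have "acode Q (j + 1) < Q" using acode_lt d by simp
    then show ?thesis unfolding lo_def hi_def using d bcode_b[of j] by auto
  qed
qed

lemma lohi_inj:
  assumes p: "p < n" and q: "q < n" and l: "lo k Q p = lo k Q q" and h: "hi k Q p = hi k Q q"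
  shows "p = q"
proof -
  have hc: "\<And>j. 2 * j < 2 * k - 1 \<Longrightarrow> hi k Q (2 * j) = bcode Q j \<and> lo k Q (2 * j) = acode Q j \<and> acode Q j < Q"
    unfolding lo_def hi_def using acode_lt by auto
  have hd: "\<And>j. 2 * j + 1 < 2 * k - 1 \<Longrightarrow> hi k Q (2 * j + 1) = bcode Q j \<and> lo k Q (2 * j + 1) = acode Q (j + 1) \<and> acode Q (j + 1) < Q"
    unfolding lo_def hi_def using acode_lt by auto
  have ha: "hi k Q (2 * k) = 2 * Q \<and> lo k Q (2 * k) = 0" unfolding lo_def hi_def by simp
  have ne: "2 * k - 1 \<noteq> 2 * k" using k1 by simp
  have hb: "hi k Q (2 * k - 1) = 2 * Q \<and> lo k Q (2 * k - 1) = bcode Q (k - 1)" unfolding lo_def hi_def using ne by simp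
  have bb: "\<And>j. bcode Q j < 2 * Q \<and> bcode Q j > 0" using bcode_b Q2 by (metis less_le_trans zero_less_numeral le_less_trans not_less bcode_def le_add1 pos2 order_le_less_trans)
  have bm: "\<And>j j'. bcode Q j = bcode Q j' \<Longrightarrow> j mod Q = j' mod Q" unfolding bcode_def by simp
  have parc: "\<And>j. acode Q j mod 2 = (bcode Q j - Q) mod 2" using acode_par bcode_par by simp
  have pard: "\<And>j. acode Q (j + 1) mod 2 \<noteq> (bcode Q j - Q) mod 2" using acode_par bcode_par by presburger
  from p show ?thesis
  proof (cases rule: classes)
    case a
    from q show ?thesis
    proof (cases rule: classes)
      case b then show ?thesis using a ha hb l bb by (metis less_irrefl)
    next
      case (c j) then show ?thesis using a ha hc h bb by (metis less_irrefl)
    next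
      case (d j) then show ?thesis using a ha hd h bb by (metis less_irrefl)
    qed (use a in simp)
  next
    case b
    from q show ?thesis
    proof (cases rule: classes)
      case a then show ?thesis using b ha hb l bb by (metis less_irrefl)
    next
      case (c j) then show ?thesis using b hb hc h bb by (metis less_irrefl)
    next
      case (d j) then show ?thesis using b hb hd h bb by (metis less_irrefl)
    qed (use b in simp)
  next
    case (c j)
    from q show ?thesis
    proof (cases rule: classes)
      case a then show ?thesis using c ha hc h bb by (metis less_irrefl)
    next
      case b then show ?thesis using c hb hc h bb by (metis less_irrefl)
    next
      case (c j')
      have "acode Q j = acode Q j'" "bcode Q j = bcode Q j'" using hc[of j] hc[of j'] \<open>p = 2 * j\<close> \<open>p < 2 * k - 1\<close> c l h by auto
      then have "j = j'" using acode_inj bm by blast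
      then show ?thesis using c \<open>p = 2 * j\<close> by simp
    next
      case (d j')
      have "acode Q j = acode Q (j' + 1)" "bcode Q j = bcode Q j'" using hc[of j] hd[of j'] \<open>p = 2 * j\<close> \<open>p < 2 * k - 1\<close> d l h by auto
      then show ?thesis using parc[of j] pard[of j'] by simp
    qed
  next
    case (d j)
    from q show ?thesis
    proof (cases rule: classes)
      case a then show ?thesis using d ha hd h bb by (metis less_irrefl)
    next
      case b then show ?thesis using d hb hd h bb by (metis less_irrefl)
    next
      case (c j')
      have "acode Q (j + 1) = acode Q j'" "bcode Q j = bcode Q j'" using hd[of j] hc[of j'] \<open>p = 2 * j + 1\<close> \<open>p < 2 * k - 1\<close> c l h by auto
      then show ?thesis using parc[of j'] pard[of j] by simp
    next
      case (d j')
      have e: "acode Q (j + 1) = acode Q (j' + 1)" "bcode Q j = bcode Q j'" using hd[of j] hd[of j'] \<open>p = 2 * j + 1\<close> \<open>p < 2 * k - 1\<close> d l h by auto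
      have "j mod Q = j' mod Q" using bm e(2) .
      then have "(j + 1) mod Q = (j' + 1) mod Q" by (metis mod_add_left_eq)
      then have "j + 1 = j' + 1" using acode_inj e(1) by blast
      then show ?thesis using d \<open>p = 2 * j + 1\<close> by simp
    qed
  qed
qed

lemma U_code: "p < n \<Longrightarrow> q < n \<Longrightarrow> {code k Q p, code k Q (nx n p)} = {code k Q q, code k Q (nx n q)} \<Longrightarrow> p = q"
proof -
  assume p: "p < n" and q: "q < n" and e: "{code k Q p, code k Q (nx n p)} = {code k Q q, code k Q (nx n q)}"
  have "{lo k Q p, hi k Q p} = {lo k Q q, hi k Q q}" using e pair_eq p q by simp
  then have "lo k Q p = lo k Q q \<and> hi k Q p = hi k Q q"
    using lo_hi[OF p] lo_hi[OF q] by (auto simp: doubleton_eq_iff)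
  then show "p = q" using lohi_inj p q by blast
qed

lemma D1_code: "p < n \<Longrightarrow> code k Q p \<noteq> code k Q (nx n p)"
proof
  assume p: "p < n" and e: "code k Q p = code k Q (nx n p)"
  have "{lo k Q p, hi k Q p} = {code k Q p}" using pair_eq[OF p] e by simp
  then show False using lo_hi[OF p] by (metis doubleton_eq_iff less_irrefl singleton_insert_inj_eq)
qed

lemma D2_code: "p < n \<Longrightarrow> code k Q (pv n p) \<noteq> code k Q (nx n p)"
proof -
  assume p: "p < n"
  have bpos: "\<And>j. bcode Q j \<noteq> 0" "\<And>j. bcode Q j \<noteq> 2 * Q" using bcode_b Q2 by (metis not_less not_numeral_le_zero le_zero_eq less_le_trans zero_less_numeral, metis less_irrefl)
  show ?thesis
  proof (cases "p = 0")
    case True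
    have "pv n p = 2 * k" unfolding pv_def True by simp
    moreover have "nx n p = 2 * 0 + 1" unfolding nx_def True using k1 by simp
    ultimately have "code k Q (pv n p) = 2 * Q" "code k Q (nx n p) = bcode Q 0" using code_top code_od[of 0] k1 by auto
    then show ?thesis using bpos(2)[of 0] by metis
  next
    case False
    show ?thesis
    proof (cases "p = 2 * k")
      case True
      have "pv n p = 2 * (k - 1) + 1" using pv_eq[OF p] True k1 by simp
      moreover have "nx n p = 2 * 0" unfolding nx_def True by simp
      ultimately show ?thesis using code_od[of "k - 1"] code_ev[of 0] k1 bpos unfolding acode_def by simp
    next
      case pk: False
      have pvp: "pv n p = p - 1" using pv_eq[OF p] False by simp
      have nxp: "nx n p = p + 1" unfolding nx_def using p pk by simp
      have cl: "code k Q (p - 1) < 2 * Q"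
      proof (cases "even (p - 1)")
        case True then obtain j where j: "p - 1 = 2 * j" by blast
        have jk: "j < k" using j p pk by linarith
        then show ?thesis using code_ev[of j] acode_lt[of j] j by simp
      next
        case False then obtain j where j: "p - 1 = 2 * j + 1" using oddE by blast
        have jk: "2 * j + 1 < 2 * k" using j p pk by linarith
        then show ?thesis using code_od[of j] bcode_b[of j] j by simp
      qed
      show ?thesis
      proof (cases "p + 1 = 2 * k")
        case True then show ?thesis using pvp nxp code_top cl by simp
      next
        case np: False
        show ?thesis
        proof (cases "even (p - 1)")
          case True
          then obtain j where j: "p - 1 = 2 * j" by blast
          have "p + 1 = 2 * (j + 1)" using j False by simp
          then have "code k Q (p + 1) = acode Q (j + 1)" "code k Q (p - 1) = acode Q j"
            using code_ev[of "j + 1"] code_ev[of j] j np p pk by auto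
          moreover have "acode Q j \<noteq> acode Q (j + 1)"
          proof
            assume "acode Q j = acode Q (j + 1)"
            then have "j mod 2 = (j + 1) mod 2" using acode_par[of j] acode_par[of "j + 1"] by simp
            then show False by presburger
          qed
          ultimately show ?thesis using pvp nxp by simp
        next
          case odd: False
          then obtain j where j: "p - 1 = 2 * j + 1" using oddE by blast
          have "p + 1 = 2 * (j + 1) + 1" using j False by simp
          then have "code k Q (p + 1) = bcode Q (j + 1)" "code k Q (p - 1) = bcode Q j"
            using code_od[of "j + 1"] code_od[of j] j np p pk by auto
          moreover have "j mod Q \<noteq> (j + 1) mod Q"
          proof
            assume a: "j mod Q = (j + 1) mod Q"
            have "Suc j mod Q = (if Suc (j mod Q) = Q then 0 else Suc (j mod Q))" by (rule mod_Suc)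
            then show False using a Q2 by (auto split: if_splits)
          qed
          ultimately show ?thesis using pvp nxp unfolding bcode_def by simp
        qed
      qed
    qed
  qed
qed

end

fun enc :: "nat \<Rightarrow> nat \<Rightarrow> bool list" where
  "enc 0 x = []"
| "enc (Suc l) x = odd x # enc l (x div 2)"

lemma enc_len: "length (enc l x) = l"
  by (induction l arbitrary: x) auto

lemma enc_inj: "x < 2 ^ l \<Longrightarrow> y < 2 ^ l \<Longrightarrow> enc l x = enc l y \<Longrightarrow> x = y"
proof (induction l arbitrary: x y)
  case 0 then show ?case by simp
next
  case (Suc l)
  have p: "odd x = odd y" and r: "enc l (x div 2) = enc l (y div 2)" using Suc.prems by auto
  have "x div 2 < 2 ^ l" "y div 2 < 2 ^ l" using Suc.prems by auto
  then have "x div 2 = y div 2" using Suc.IH r by blast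
  then show ?case using p by (metis div_mult_mod_eq odd_iff_mod_2_eq_one parity_cases)
qed




definition Wl :: "nat \<Rightarrow> nat \<Rightarrow> nat \<Rightarrow> bool list" where
  "Wl k r p = enc (r + 4) (code k (2 ^ (r + 2)) p)"

definition Vb :: "nat \<Rightarrow> nat \<Rightarrow> verifier" where
  "Vb k r S l N \<longleftrightarrow> length S = 2 \<and> length N = 2 \<and> N ! 0 \<noteq> N ! 1 \<and>
     (\<exists>p < 2 * k + 1. l = Wl k r p \<and>
        (\<forall>i<2. (N ! i = Wl k r (nx (2 * k + 1) p) \<and> S ! i = even p) \<or>
               (N ! i = Wl k r (pv (2 * k + 1) p) \<and> S ! i = even (pv (2 * k + 1) p))))"

lemma codep_inst: "k \<ge> 1 \<Longrightarrow> k \<le> 2 ^ (2 * r + 3) \<Longrightarrow> codep k (2 ^ (r + 2))"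
proof (unfold_locales)
  assume "k \<le> 2 ^ (2 * r + 3)"
  moreover have "(2::nat) ^ (r + 2) * 2 ^ (r + 2) = 2 * 2 ^ (2 * r + 3)"
  proof -
    have e: "2 * r + 3 = (r + r) + 3" by simp
    have "(2::nat) ^ ((r + r) + 3) = (2 ^ r * 2 ^ r) * 2 ^ 3" by (simp only: power_add)
    then have a: "(2::nat) ^ (2 * r + 3) = 8 * (2 ^ r * 2 ^ r)" unfolding e by simp
    have b: "(2::nat) ^ (r + 2) = 4 * 2 ^ r" by (simp add: power_add)
    show ?thesis unfolding a b by simp
  qed
  ultimately show "2 * k \<le> 2 ^ (r + 2) * 2 ^ (r + 2)" by simp
qed auto

lemma Wl_eq:
  assumes k1: "k \<ge> 1" and kb: "k \<le> 2 ^ (2 * r + 3)" and a: "a < 2 * k + 1" and b: "b < 2 * k + 1"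
  shows "Wl k r a = Wl k r b \<longleftrightarrow> code k (2 ^ (r + 2)) a = code k (2 ^ (r + 2)) b"
proof -
  interpret codep k "2 ^ (r + 2)" using codep_inst k1 kb by blast
  have e4: "(2::nat) ^ (r + 4) = 4 * 2 ^ (r + 2)" by (simp add: power_add)
  have o: "(1::nat) \<le> 2 ^ (r + 2)" by simp
  have l: "code k (2 ^ (r + 2)) a < 2 ^ (r + 4)" "code k (2 ^ (r + 2)) b < 2 ^ (r + 4)"
    unfolding e4 using code_lt[OF a] code_lt[OF b] o by linarith+
  show ?thesis unfolding Wl_def
  proof
    assume "enc (r + 4) (code k (2 ^ (r + 2)) a) = enc (r + 4) (code k (2 ^ (r + 2)) b)"
    then show "code k (2 ^ (r + 2)) a = code k (2 ^ (r + 2)) b" by (rule enc_inj[OF l])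
  qed simp
qed

lemma wordp_inst:
  assumes k1: "k \<ge> 1" and kb: "k \<le> 2 ^ (2 * r + 3)"
  shows "wordp (2 * k + 1) (Wl k r)"
proof -
  interpret codep k "2 ^ (r + 2)" using codep_inst k1 kb by blast
  let ?n = "2 * k + 1"
  have n0: "?n > 0" by simp
  show ?thesis
  proof (unfold_locales)
    show "3 \<le> ?n" using k1 by simp
  next
    fix p assume p: "p < ?n"
    have "nx ?n p < ?n" by (rule nx_lt[OF n0])
    then show "Wl k r p \<noteq> Wl k r (nx ?n p)" using Wl_eq[OF k1 kb p] D1_code[OF p] by simp
  next
    fix p assume p: "p < ?n"
    have "nx ?n p < ?n" "pv ?n p < ?n" by (rule nx_lt[OF n0], rule pv_lt[OF n0])
    then show "Wl k r (pv ?n p) \<noteq> Wl k r (nx ?n p)" using Wl_eq[OF k1 kb] D2_code[OF p] by simp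
  next
    fix p q assume p: "p < ?n" and q: "q < ?n" and e: "{Wl k r p, Wl k r (nx ?n p)} = {Wl k r q, Wl k r (nx ?n q)}"
    have l: "nx ?n p < ?n" "nx ?n q < ?n" by (rule nx_lt[OF n0], rule nx_lt[OF n0])
    let ?c = "code k (2 ^ (r + 2))"
    have "(Wl k r p = Wl k r q \<and> Wl k r (nx ?n p) = Wl k r (nx ?n q)) \<or> (Wl k r p = Wl k r (nx ?n q) \<and> Wl k r (nx ?n p) = Wl k r q)"
      using e by (simp add: doubleton_eq_iff)
    then have "(?c p = ?c q \<and> ?c (nx ?n p) = ?c (nx ?n q)) \<or> (?c p = ?c (nx ?n q) \<and> ?c (nx ?n p) = ?c q)"
      using Wl_eq[OF k1 kb p q] Wl_eq[OF k1 kb l] Wl_eq[OF k1 kb p l(2)] Wl_eq[OF k1 kb l(1) q] by blast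
    then have "{?c p, ?c (nx ?n p)} = {?c q, ?c (nx ?n q)}" by (auto simp: doubleton_eq_iff)
    then show "p = q" using U_code p q by blast
  qed
qed




lemma even_nx: "n > 0 \<Longrightarrow> odd n \<Longrightarrow> q < n \<Longrightarrow> even q \<or> even (nx n q)"
proof -
  assume n: "n > 0" "odd n" and q: "q < n"
  show ?thesis
  proof (cases "q + 1 < n")
    case True then show ?thesis unfolding nx_def by auto
  next
    case False then have "q + 1 = n" using q by simp
    then show ?thesis unfolding nx_def by simp
  qed
qed

lemma partB_sound:
  assumes k1: "k \<ge> 1" and kb: "k \<le> 2 ^ (2 * r + 3)" and R: "ringS G cs (2 * k + 1)"
    and I0: "\<forall>v\<in>verts G. I v = []" and acc: "accepts (Vb k r) (G, I, Out) L"
  shows "ec_feasible (G, I, Out) \<and> card (ec_set G Out) = k + 1"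
proof -
  interpret wordp "2 * k + 1" "Wl k r" using wordp_inst k1 kb by blast
  let ?n = "2 * k + 1"
  have n0: "?n > 0" by simp
  define lb where "lb j = L (cs!j)" for j
  define P where "P j p ori \<longleftrightarrow> p < ?n \<and> lb j = Wl k r p \<and>
     (ori \<longrightarrow> lb (nx ?n j) = Wl k r (nx ?n p) \<and> lb (pv ?n j) = Wl k r (pv ?n p)) \<and>
     (\<not> ori \<longrightarrow> lb (nx ?n j) = Wl k r (pv ?n p) \<and> lb (pv ?n j) = Wl k r (nx ?n p)) \<and>
     length (Out (cs!j)) = 2 \<and>
     (\<forall>i<2. Out (cs!j) ! i = (if nbrs G (cs!j) ! i = cs!(nx ?n j)
              then (if ori then even p else even (pv ?n p)) else (if ori then even (pv ?n p) else even p)))" for j p ori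
  have loc: "\<exists>p ori. P j p ori" if j: "j < ?n" for j
  proof -
    let ?v = "cs!j"
    have v: "?v \<in> verts G" using R_mem[OF R j] .
    have V: "Vb k r (Out ?v) (L ?v) (map L (nbrs G ?v))" using acc v I0 unfolding accepts_def by simp
    have nb: "length (nbrs G ?v) = 2" "distinct (nbrs G ?v)" using R_nb[OF R j] by auto
    obtain p where p: "p < ?n" "L ?v = Wl k r p" and lS: "length (Out ?v) = 2"
      and N01: "map L (nbrs G ?v) ! 0 \<noteq> map L (nbrs G ?v) ! 1"
      and cond: "\<forall>i<2. (map L (nbrs G ?v) ! i = Wl k r (nx ?n p) \<and> Out ?v ! i = even p) \<or>
               (map L (nbrs G ?v) ! i = Wl k r (pv ?n p) \<and> Out ?v ! i = even (pv ?n p))"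
      using V unfolding Vb_def by blast
    define kn where "kn = port_nx G cs ?n j"
    have kn: "kn < 2" "nbrs G ?v ! kn = cs!(nx ?n j)" using port_nx[OF R j] unfolding kn_def by auto
    obtain kp where kp: "kp < 2" "nbrs G ?v ! kp = cs!(pv ?n j)" using R_has_port[OF R j, of "cs!(pv ?n j)"] by auto
    have ne: "cs!(nx ?n j) \<noteq> cs!(pv ?n j)" using R_nx_pv_ne[OF R j] .
    have knkp: "kn \<noteq> kp" using kn kp ne by auto
    have Nkn: "map L (nbrs G ?v) ! kn = lb (nx ?n j)" using kn nb unfolding lb_def by simp
    have Nkp: "map L (nbrs G ?v) ! kp = lb (pv ?n j)" using kp nb unfolding lb_def by simp
    have lne: "lb (nx ?n j) \<noteq> lb (pv ?n j)"
    proof -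
      have "(kn = 0 \<and> kp = 1) \<or> (kn = 1 \<and> kp = 0)" using kn kp knkp by auto
      then show ?thesis using N01 Nkn Nkp by auto
    qed
    have d2: "Wl k r (pv ?n p) \<noteq> Wl k r (nx ?n p)" using D2 p by blast
    have ck: "(lb (nx ?n j) = Wl k r (nx ?n p) \<and> Out ?v ! kn = even p) \<or> (lb (nx ?n j) = Wl k r (pv ?n p) \<and> Out ?v ! kn = even (pv ?n p))"
      using cond kn Nkn by metis
    have cp: "(lb (pv ?n j) = Wl k r (nx ?n p) \<and> Out ?v ! kp = even p) \<or> (lb (pv ?n j) = Wl k r (pv ?n p) \<and> Out ?v ! kp = even (pv ?n p))"
      using cond kp Nkp by metis
    have ports: "\<And>i. i < 2 \<Longrightarrow> i = kn \<or> i = kp" using kn kp knkp by auto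
    have nbi: "\<And>i. i < 2 \<Longrightarrow> nbrs G ?v ! i = cs!(nx ?n j) \<longleftrightarrow> i = kn" using ports kn kp ne by metis
    define ori where "ori = (lb (nx ?n j) = Wl k r (nx ?n p))"
    show ?thesis
    proof (intro exI)
      show "P j p ori"
      proof (cases ori)
        case True
        have a: "lb (nx ?n j) = Wl k r (nx ?n p)" using True ori_def by simp
        have b: "lb (pv ?n j) = Wl k r (pv ?n p)" "Out ?v ! kp = even (pv ?n p)" using cp a lne by auto
        have c: "Out ?v ! kn = even p" using ck a d2 by auto
        have bits: "\<forall>i<2. Out ?v ! i = (if nbrs G ?v ! i = cs!(nx ?n j)
              then (if ori then even p else even (pv ?n p)) else (if ori then even (pv ?n p) else even p))"
          using nbi ports b c True knkp by auto
        show ?thesis unfolding P_def using p a b True lS bits lb_def by simp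
      next
        case False
        have a: "lb (nx ?n j) = Wl k r (pv ?n p)" "Out ?v ! kn = even (pv ?n p)" using ck False ori_def by auto
        have b: "lb (pv ?n j) = Wl k r (nx ?n p)" "Out ?v ! kp = even p" using cp a lne by auto
        have bits: "\<forall>i<2. Out ?v ! i = (if nbrs G ?v ! i = cs!(nx ?n j)
              then (if ori then even p else even (pv ?n p)) else (if ori then even (pv ?n p) else even p))"
          using nbi ports a b False knkp by auto
        show ?thesis unfolding P_def using p a b False lS bits lb_def by simp
      qed
    qed
  qed
  have "\<forall>j. \<exists>p ori. j < ?n \<longrightarrow> P j p ori" using loc by blast
  then obtain pos ori where po: "\<forall>j. j < ?n \<longrightarrow> P j (pos j) (ori j)" by metis
  have HH: "\<forall>j<?n. H lb pos ori j" using po unfolding P_def H_def by blast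
  define \<beta> where "\<beta> j = even (e pos ori j)" for j
  have Or: "outrel G cs ?n Out \<beta>"
    unfolding outrel_def
  proof (intro allI impI conjI)
    fix j assume j: "j < ?n"
    have Pj: "P j (pos j) (ori j)" using po j by blast
    then show "length (Out (cs!j)) = 2" unfolding P_def by simp
    fix i assume i: "i < (2::nat)"
    have ep: "e pos ori (pv ?n j) = (if ori j then pv ?n (pos j) else pos j)" using e_prev[OF HH j] .
    show "Out (cs!j) ! i = (if nbrs G (cs!j) ! i = cs!(nx ?n j) then \<beta> j else \<beta> (pv ?n j))"
      using Pj i ep unfolding P_def \<beta>_def e_def by auto
  qed
  have c: "\<forall>j<?n. \<beta> (pv ?n j) \<or> \<beta> j"
  proof (intro allI impI)
    fix j assume j: "j < ?n"
    have pj: "pv ?n j < ?n" using pv_lt[OF n0] .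
    have es: "e pos ori j = (if ori 0 then nx ?n (e pos ori (pv ?n j)) else pv ?n (e pos ori (pv ?n j)))"
      using e_step[OF HH pj] nx_pv[OF j] by simp
    have el: "e pos ori (pv ?n j) < ?n" using e_lt[OF HH pj] .
    have "even (e pos ori (pv ?n j)) \<or> even (nx ?n (e pos ori (pv ?n j)))" using even_nx[OF n0 _ el] by simp
    moreover have "even (pv ?n (e pos ori (pv ?n j))) \<or> even (e pos ori (pv ?n j))" using even_ok[OF n0] el by blast
    ultimately show "\<beta> (pv ?n j) \<or> \<beta> j" unfolding \<beta>_def using es by (cases "ori 0") auto
  qed
  have feas: "ec_feasible (G, I, Out)" using I0 enc_outrel[OF R Or] cover_outrel[OF R Or c] by simp
  have "card (ec_set G Out) = card {j. j < ?n \<and> \<beta> j}" using card_outrel[OF R Or] .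
  also have "\<dots> = card {q. q < ?n \<and> even q}" unfolding \<beta>_def
    by (rule card_bij_count[OF e_inj[OF HH]]) (use e_lt[OF HH] in auto)
  also have "\<dots> = k + 1" using card_even[of ?n] by simp
  finally show ?thesis using feas by simp
qed




lemma rot_facts:
  assumes s: "s < n" and j: "j < n"
  shows "nx n ((j + (n - s)) mod n) = ((nx n j) + (n - s)) mod n"
    and "pv n ((j + (n - s)) mod n) = ((pv n j) + (n - s)) mod n"
    and "(s + (j + (n - s)) mod n) mod n = j"
proof -
  have n0: "n > 0" using s by simp
  have g: "\<And>a b. ((a + b) mod n + (n - s)) mod n = ((a + (n - s)) mod n + b) mod n"
  proof -
    fix a b
    have "((a + b) mod n + (n - s)) mod n = (a + b + (n - s)) mod n" by (rule mod_add_left_eq)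
    also have "\<dots> = (a + (n - s) + b) mod n" by (simp add: add_ac)
    also have "\<dots> = ((a + (n - s)) mod n + b) mod n" by (rule mod_add_left_eq[symmetric])
    finally show "((a + b) mod n + (n - s)) mod n = ((a + (n - s)) mod n + b) mod n" .
  qed
  show "nx n ((j + (n - s)) mod n) = ((nx n j) + (n - s)) mod n"
    unfolding nx_def using g[of j 1] by simp
  have pvx: "\<And>x. pv n x = (x + (n - 1)) mod n" unfolding pv_def using n0 by simp
  show "pv n ((j + (n - s)) mod n) = ((pv n j) + (n - s)) mod n"
    unfolding pvx using g[of j "n - 1"] by simp
  have "(s + (j + (n - s)) mod n) mod n = (s + (j + (n - s))) mod n" by (simp add: mod_add_right_eq)
  also have "s + (j + (n - s)) = j + n" using s by simp
  finally show "(s + (j + (n - s)) mod n) mod n = j" using j by simp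
qed

lemma partB_complete:
  assumes k1: "k \<ge> 1" and kb: "k \<le> 2 ^ (2 * r + 3)"
    and Y: "(G, I, Out) \<in> APLS_yes ec_feasible ec_size (\<lambda>G. is_ring G (2 * k + 1))"
  shows "\<exists>L. (\<forall>v\<in>verts G. length (L v) \<le> r + 4) \<and> accepts (Vb k r) (G, I, Out) L"
proof -
  interpret wordp "2 * k + 1" "Wl k r" using wordp_inst k1 kb by blast
  let ?n = "2 * k + 1"
  have n0: "?n > 0" by simp
  have vg: "valid_graph G" and rg: "is_ring G ?n" and fe: "ec_feasible (G, I, Out)"
    and opt: "ec_size (G, I, Out) = OPT_min ec_feasible ec_size G I"
    using Y unfolding APLS_yes_def APLS_universe_def by auto
  obtain cs where R: "ringS G cs ?n" using ring_of[OF vg rg] k1 by auto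
  have I0: "\<forall>v\<in>verts G. I v = []" and enc: "ec_encoding_ok G Out" and cov: "is_edge_cover G (ec_set G Out)"
    using fe by auto
  define \<beta> where "\<beta> j = Out (cs!j) ! port_nx G cs ?n j" for j
  have Or: "outrel G cs ?n Out \<beta>" unfolding \<beta>_def by (rule outrel_of_enc[OF R enc])
  have c: "\<forall>j<?n. \<beta> (pv ?n j) \<or> \<beta> j" using cover_outrel_conv[OF R Or cov] by blast
  define idx where "idx v = (SOME j. j < ?n \<and> cs!j = v)" for v
  have idx: "\<And>j. j < ?n \<Longrightarrow> idx (cs!j) = j"
  proof -
    fix j assume j: "j < ?n"
    have "idx (cs!j) < ?n \<and> cs!(idx (cs!j)) = cs!j" unfolding idx_def by (rule someI[of _ j]) (use j in simp)
    then show "idx (cs!j) = j" using R_inj[OF R] j by blast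
  qed
  define Op where "Op v = map (\<lambda>w. if w = cs!(nx ?n (idx v)) then even (idx v) else even (pv ?n (idx v))) (nbrs G v)" for v
  have Orp: "outrel G cs ?n Op even"
    unfolding outrel_def
  proof (intro allI impI conjI)
    fix j assume j: "j < ?n"
    show "length (Op (cs!j)) = 2" unfolding Op_def using R_nb[OF R j] by simp
    fix i assume i: "i < (2::nat)"
    show "Op (cs!j) ! i = (if nbrs G (cs!j) ! i = cs!(nx ?n j) then even j else even (pv ?n j))"
      unfolding Op_def using i R_nb[OF R j] idx[OF j] by simp
  qed
  have cp: "\<forall>j<?n. even (pv ?n j) \<or> even j" using even_ok[OF n0] .
  have fp: "ec_feasible (G, I, Op)" using I0 enc_outrel[OF R Orp] cover_outrel[OF R Orp cp] by simp
  have sp: "ec_size (G, I, Op) = int (k + 1)" using card_outrel[OF R Orp] card_even[of ?n] by simp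
  have "ec_size (G, I, Out) \<le> ec_size (G, I, Op)"
    using opt OPT_le[of ec_feasible G I Out ec_size Op] fe ec_size_nonneg fp by simp
  then have le: "card {j. j < ?n \<and> \<beta> j} \<le> k + 1" using sp card_outrel[OF R Or] by simp
  obtain s where s: "s < ?n" and pat: "\<forall>q<?n. \<beta> ((s + q) mod ?n) = even q"
    using cyc_pattern[OF refl c le] by blast
  define pos where "pos j = (j + (?n - s)) mod ?n" for j
  define Lb where "Lb v = Wl k r (pos (idx v))" for v
  have posl: "\<And>j. pos j < ?n" unfolding pos_def by simp
  have bj: "\<And>j. j < ?n \<Longrightarrow> \<beta> j = even (pos j)" using pat rot_facts(3)[OF s] posl unfolding pos_def by metis
  have pnx: "\<And>j. j < ?n \<Longrightarrow> pos (nx ?n j) = nx ?n (pos j)" using rot_facts(1)[OF s] unfolding pos_def by metis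
  have ppv: "\<And>j. j < ?n \<Longrightarrow> pos (pv ?n j) = pv ?n (pos j)" using rot_facts(2)[OF s] unfolding pos_def by metis
  show ?thesis
  proof (intro exI conjI)
    show "\<forall>v\<in>verts G. length (Lb v) \<le> r + 4" unfolding Lb_def Wl_def by (simp add: enc_len)
    show "accepts (Vb k r) (G, I, Out) Lb"
      unfolding accepts_def
    proof (simp, intro ballI)
      fix v assume v: "v \<in> verts G"
      obtain j where j: "j < ?n" "v = cs!j" using R_vert[OF R v] by blast
      have nj: "nx ?n j < ?n" "pv ?n j < ?n" using nx_lt[OF n0] pv_lt[OF n0] by auto
      have nb: "length (nbrs G v) = 2" "distinct (nbrs G v)" "set (nbrs G v) = {cs!(nx ?n j), cs!(pv ?n j)}"
        using R_nb[OF R j(1)] j by auto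
      have ne: "cs!(nx ?n j) \<noteq> cs!(pv ?n j)" using R_nx_pv_ne[OF R j(1)] .
      have Lnx: "Lb (cs!(nx ?n j)) = Wl k r (nx ?n (pos j))" unfolding Lb_def using idx nj pnx j by simp
      have Lpv: "Lb (cs!(pv ?n j)) = Wl k r (pv ?n (pos j))" unfolding Lb_def using idx nj ppv j by simp
      have d2: "Wl k r (pv ?n (pos j)) \<noteq> Wl k r (nx ?n (pos j))" using D2 posl by blast
      have port: "\<And>i. i < 2 \<Longrightarrow> nbrs G v ! i = cs!(nx ?n j) \<or> nbrs G v ! i = cs!(pv ?n j)"
        using nb by (metis insert_iff nth_mem singletonD)
      have n01: "nbrs G v ! 0 \<noteq> nbrs G v ! 1" using nb by (simp add: nth_eq_iff_index_eq)
      have lO: "length (I v @ Out v) = 2" using I0 v Or j unfolding outrel_def by simp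
      have Oi: "\<And>i. i < 2 \<Longrightarrow> (I v @ Out v) ! i = (if nbrs G v ! i = cs!(nx ?n j) then \<beta> j else \<beta> (pv ?n j))"
        using I0 v Or j unfolding outrel_def by simp
      have N01: "map Lb (nbrs G v) ! 0 \<noteq> map Lb (nbrs G v) ! 1"
      proof -
        have "(nbrs G v ! 0 = cs!(nx ?n j) \<and> nbrs G v ! 1 = cs!(pv ?n j)) \<or> (nbrs G v ! 0 = cs!(pv ?n j) \<and> nbrs G v ! 1 = cs!(nx ?n j))"
          using port[of 0] port[of 1] n01 by auto
        then show ?thesis using nb Lnx Lpv d2 by auto
      qed
      have main: "\<forall>i<2. (map Lb (nbrs G v) ! i = Wl k r (nx ?n (pos j)) \<and> (I v @ Out v) ! i = even (pos j)) \<or>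
               (map Lb (nbrs G v) ! i = Wl k r (pv ?n (pos j)) \<and> (I v @ Out v) ! i = even (pv ?n (pos j)))"
      proof (intro allI impI)
        fix i assume i: "i < (2::nat)"
        show "(map Lb (nbrs G v) ! i = Wl k r (nx ?n (pos j)) \<and> (I v @ Out v) ! i = even (pos j)) \<or>
               (map Lb (nbrs G v) ! i = Wl k r (pv ?n (pos j)) \<and> (I v @ Out v) ! i = even (pv ?n (pos j)))"
        proof (cases "nbrs G v ! i = cs!(nx ?n j)")
          case True
          then show ?thesis using Oi[OF i] bj[OF j(1)] Lnx nb i by simp
        next
          case False
          then have "nbrs G v ! i = cs!(pv ?n j)" using port i by blast
          then show ?thesis using Oi[OF i] False bj[OF nj(2)] ppv[OF j(1)] Lpv nb i by simp
        qed
      qed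
      show "Vb k r (I v @ Out v) (Lb v) (map Lb (nbrs G v))"
        unfolding Vb_def using lO nb N01 main posl[of j] j idx unfolding Lb_def by auto
    qed
  qed
qed

theorem lemma5p6:
  shows "\<exists>c :: nat. \<forall>(\<kappa> :: nat) (r :: nat). \<kappa> \<ge> 1 \<longrightarrow>
     has_APLS_min ec_feasible ec_size (\<lambda>G. odd_girth_ge G (2 * \<kappa> + 1))
        ((real \<kappa> + 1) / real \<kappa>) r \<longrightarrow>
     has_APLS_min ec_feasible ec_size (\<lambda>G. is_ring G (2 * \<kappa> + 1)) 1 (r + c)"
proof (intro exI[of _ 4] allI impI)
  fix \<kappa> r :: nat
  assume k1: "\<kappa> \<ge> 1" and hyp: "has_APLS_min ec_feasible ec_size (\<lambda>G. odd_girth_ge G (2 * \<kappa> + 1)) ((real \<kappa> + 1) / real \<kappa>) r"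
  have kb: "\<kappa> \<le> 2 ^ (2 * r + 3)" using partA[OF k1] hyp by (meson not_le)
  let ?n = "2 * \<kappa> + 1"
  show "has_APLS_min ec_feasible ec_size (\<lambda>G. is_ring G ?n) 1 (r + 4)"
    unfolding has_APLS_min_def has_GPLS_def
  proof (intro exI[of _ "Vb \<kappa> r"] conjI ballI allI)
    fix x assume x: "x \<in> APLS_yes ec_feasible ec_size (\<lambda>G. is_ring G ?n)"
    obtain G I Out where xe: "x = (G, I, Out)" by (cases x) auto
    show "\<exists>L. (\<forall>v\<in>verts (fst x). length (L v) \<le> r + 4) \<and> accepts (Vb \<kappa> r) x L"
      using partB_complete[OF k1 kb] x xe by simp
  next
    fix x L assume x: "x \<in> APLS_no_min ec_feasible ec_size (\<lambda>G. is_ring G ?n) 1"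
    obtain G I Out where xe: "x = (G, I, Out)" by (cases x) auto
    have vg: "valid_graph G" and rg: "is_ring G ?n" and ex: "\<exists>O'. ec_feasible (G, I, O')"
      and nf: "\<not> (ec_feasible (G, I, Out) \<and> real_of_int (ec_size (G, I, Out)) \<le> 1 * real_of_int (OPT_min ec_feasible ec_size G I))"
      using x xe unfolding APLS_no_min_def APLS_universe_def by auto
    obtain cs where R: "ringS G cs ?n" using ring_of[OF vg rg] k1 by auto
    obtain O' where fO: "ec_feasible (G, I, O')" using ex by blast
    have I0: "\<forall>v\<in>verts G. I v = []" using fO by simp
    show "\<not> accepts (Vb \<kappa> r) x L"
    proof
      assume "accepts (Vb \<kappa> r) x L"
      then have sd: "ec_feasible (G, I, Out) \<and> card (ec_set G Out) = \<kappa> + 1"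
        using partB_sound[OF k1 kb R I0] xe by simp
      obtain Om where Om: "ec_feasible (G, I, Om)" "OPT_min ec_feasible ec_size G I = ec_size (G, I, Om)"
        using OPT_witness[of ec_feasible G I O' ec_size] fO ec_size_nonneg by blast
      have fin: "finite (verts G)" using vg unfolding valid_graph_def by simp
      have "card (verts G) \<le> 2 * card (ec_set G Om)" using cover_lb[OF fin] Om(1) by simp
      moreover have "card (verts G) = ?n" using R unfolding ringS_def by (metis distinct_card)
      ultimately have "\<kappa> + 1 \<le> card (ec_set G Om)" by simp
      then have "ec_size (G, I, Out) \<le> OPT_min ec_feasible ec_size G I" using sd Om(2) by simp
      then show False using nf sd by simp
    qed
  qed
qed



end
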